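(* Let $\Phi$ be an irreducible reduced root system with basis $\Delta$, Weyl group $W$ with length function $l$, highest root $\tilde\alpha$. For every positive long root $\alpha$, $$l(x_\alpha)=\frac{l(s_{\tilde\alpha})-l(s_\alpha)}{2}=\mathrm{ht}^\vee(\tilde\alpha)-\mathrm{ht}^\vee(\alpha),\qquad l(x_{-\alpha})=\frac{l(s_{\tilde\alpha})+l(s_\alpha)}{2}=\mathrm{ht}^\vee(\tilde\alpha)+\mathrm{ht}^\vee(\alpha)-1.$$
   Context: Fix a $W$-invariant scalar product with minimal squared root length $1$ and maximal squared root length $r$; long roots have squared length $r$; $\Delta_{\mathrm{lg}},\Delta_{\mathrm{sh}}$ are the long and short simple roots. For a long root $\gamma=\sum_{\beta\in\Delta}n_\beta\beta$, $\mathrm{ht}^\vee(\gamma)=\sum_{\beta\in\Delta_{\mathrm{lg}}}n_\beta+\frac1r\sum_{\beta\in\Delta_{\mathrm{sh}}}n_\beta$. $\tilde I=\{\beta\in\Delta:(\tilde\alpha|\beta)=0\}$, $X_{\tilde I}=\{w\in W:w(\Phi^+_{\tilde I})\subset\Phi^+\}$ where $\Phi_{\tilde I}^+$ are the positive roots in the span of $\tilde I$; for a long root $\beta$, $x_\beta$ is the unique element of $X_{\tilde I}$ with $x_\beta(\tilde\alpha)=\beta$. *)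

theory Defs
  imports "HOL-Analysis.Analysis"
begin

definition root_refl :: "'a::real_inner \<Rightarrow> 'a \<Rightarrow> 'a" where
  "root_refl \<alpha> v = v - (2 * (v \<bullet> \<alpha>) / (\<alpha> \<bullet> \<alpha>)) *\<^sub>R \<alpha>"

definition root_system :: "'a::euclidean_space set \<Rightarrow> bool" where
  "root_system \<Phi> \<longleftrightarrow> finite \<Phi> \<and> 0 \<notin> \<Phi> \<and> span \<Phi> = UNIV \<and>
     (\<forall>\<alpha>\<in>\<Phi>. root_refl \<alpha> ` \<Phi> = \<Phi>) \<and>
     (\<forall>\<alpha>\<in>\<Phi>. \<forall>\<beta>\<in>\<Phi>. 2 * (\<beta> \<bullet> \<alpha>) / (\<alpha> \<bullet> \<alpha>) \<in> \<int>)"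

definition reduced_rs :: "'a::real_inner set \<Rightarrow> bool" where
  "reduced_rs \<Phi> \<longleftrightarrow> (\<forall>\<alpha>\<in>\<Phi>. \<forall>c::real. c *\<^sub>R \<alpha> \<in> \<Phi> \<longrightarrow> c = 1 \<or> c = -1)"

definition irreducible_rs :: "'a::real_inner set \<Rightarrow> bool" where
  "irreducible_rs \<Phi> \<longleftrightarrow> \<Phi> \<noteq> {} \<and>
     (\<forall>A B. A \<union> B = \<Phi> \<and> (\<forall>a\<in>A. \<forall>b\<in>B. a \<bullet> b = 0) \<longrightarrow> A = {} \<or> B = {})"

inductive_set weyl_group :: "'a::real_inner set \<Rightarrow> ('a \<Rightarrow> 'a) set" for \<Phi> where
  wg_id: "id \<in> weyl_group \<Phi>"
| wg_step: "\<alpha> \<in> \<Phi> \<Longrightarrow> w \<in> weyl_group \<Phi> \<Longrightarrow> root_refl \<alpha> \<circ> w \<in> weyl_group \<Phi>"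

definition nonneg_comb :: "'a::real_vector set \<Rightarrow> 'a \<Rightarrow> bool" where
  "nonneg_comb \<Delta> v \<longleftrightarrow> (\<exists>c::'a \<Rightarrow> nat. v = (\<Sum>\<delta>\<in>\<Delta>. real (c \<delta>) *\<^sub>R \<delta>))"

definition pos_roots :: "'a::real_vector set \<Rightarrow> 'a set \<Rightarrow> 'a set" where
  "pos_roots \<Phi> \<Delta> = {\<beta>\<in>\<Phi>. nonneg_comb \<Delta> \<beta>}"

definition is_base :: "'a::real_vector set \<Rightarrow> 'a set \<Rightarrow> bool" where
  "is_base \<Phi> \<Delta> \<longleftrightarrow> \<Delta> \<subseteq> \<Phi> \<and> independent \<Delta> \<and>
     (\<forall>\<beta>\<in>\<Phi>. nonneg_comb \<Delta> \<beta> \<or> nonneg_comb \<Delta> (- \<beta>))"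

definition highest_root :: "'a::real_vector set \<Rightarrow> 'a set \<Rightarrow> 'a \<Rightarrow> bool" where
  "highest_root \<Phi> \<Delta> a \<longleftrightarrow> a \<in> \<Phi> \<and> (\<forall>\<beta>\<in>\<Phi>. nonneg_comb \<Delta> (a - \<beta>))"

definition base_coeff :: "'a::real_vector set \<Rightarrow> 'a \<Rightarrow> 'a \<Rightarrow> real" where
  "base_coeff \<Delta> \<gamma> = (THE c. (\<forall>\<delta>. \<delta> \<notin> \<Delta> \<longrightarrow> c \<delta> = 0) \<and> \<gamma> = (\<Sum>\<delta>\<in>\<Delta>. c \<delta> *\<^sub>R \<delta>))"

definition max_sq :: "'a::real_inner set \<Rightarrow> real" where
  "max_sq \<Phi> = Max ((\<lambda>\<beta>. \<beta> \<bullet> \<beta>) ` \<Phi>)"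

definition min_sq :: "'a::real_inner set \<Rightarrow> real" where
  "min_sq \<Phi> = Min ((\<lambda>\<beta>. \<beta> \<bullet> \<beta>) ` \<Phi>)"

text \<open>Ratio r of squared lengths of long to short roots (= maximal squared
  root length when the minimal one is normalized to 1).\<close>
definition length_ratio :: "'a::real_inner set \<Rightarrow> real" where
  "length_ratio \<Phi> = max_sq \<Phi> / min_sq \<Phi>"

definition long_root :: "'a::real_inner set \<Rightarrow> 'a \<Rightarrow> bool" where
  "long_root \<Phi> \<beta> \<longleftrightarrow> \<beta> \<in> \<Phi> \<and> \<beta> \<bullet> \<beta> = max_sq \<Phi>"

definition long_simple :: "'a::real_inner set \<Rightarrow> 'a set \<Rightarrow> 'a set" where
  "long_simple \<Phi> \<Delta> = {\<delta>\<in>\<Delta>. long_root \<Phi> \<delta>}"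

definition short_simple :: "'a::real_inner set \<Rightarrow> 'a set \<Rightarrow> 'a set" where
  "short_simple \<Phi> \<Delta> = \<Delta> - long_simple \<Phi> \<Delta>"

definition htv :: "'a::real_inner set \<Rightarrow> 'a set \<Rightarrow> 'a \<Rightarrow> real" where
  "htv \<Phi> \<Delta> \<gamma> = (\<Sum>\<delta>\<in>long_simple \<Phi> \<Delta>. base_coeff \<Delta> \<gamma> \<delta>)
     + (1 / length_ratio \<Phi>) * (\<Sum>\<delta>\<in>short_simple \<Phi> \<Delta>. base_coeff \<Delta> \<gamma> \<delta>)"

definition simple_word :: "'a::real_inner list \<Rightarrow> 'a \<Rightarrow> 'a" where
  "simple_word ds = foldr (\<lambda>\<delta> f. root_refl \<delta> \<circ> f) ds id"

definition weyl_length :: "'a::real_inner set \<Rightarrow> ('a \<Rightarrow> 'a) \<Rightarrow> nat" where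
  "weyl_length \<Delta> w = (LEAST k. \<exists>ds. length ds = k \<and> set ds \<subseteq> \<Delta> \<and> simple_word ds = w)"

definition I_tilde :: "'a::real_inner set \<Rightarrow> 'a \<Rightarrow> 'a set" where
  "I_tilde \<Delta> a = {\<beta>\<in>\<Delta>. a \<bullet> \<beta> = 0}"

definition X_tilde :: "'a::real_inner set \<Rightarrow> 'a set \<Rightarrow> 'a \<Rightarrow> ('a \<Rightarrow> 'a) set" where
  "X_tilde \<Phi> \<Delta> a = {w \<in> weyl_group \<Phi>.
      w ` {\<beta> \<in> pos_roots \<Phi> \<Delta>. \<beta> \<in> span (I_tilde \<Delta> a)} \<subseteq> pos_roots \<Phi> \<Delta>}"

definition x_elem :: "'a::real_inner set \<Rightarrow> 'a set \<Rightarrow> 'a \<Rightarrow> 'a \<Rightarrow> ('a \<Rightarrow> 'a)" where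
  "x_elem \<Phi> \<Delta> a \<beta> = (THE w. w \<in> X_tilde \<Phi> \<Delta> a \<and> w a = \<beta>)"

end

theory Submission
  imports Defs
begin



definition isom :: "('a::real_inner \<Rightarrow> 'a) \<Rightarrow> bool" where
  "isom w \<longleftrightarrow> linear w \<and> (\<forall>x y. w x \<bullet> w y = x \<bullet> y)"

lemma rr_add: "root_refl a (x + y) = root_refl a x + root_refl a y"
  by (simp add: root_refl_def inner_add_left add_divide_distrib scaleR_add_left algebra_simps)

lemma rr_scale: "root_refl a (c *\<^sub>R x) = c *\<^sub>R root_refl a x"
  by (simp add: root_refl_def algebra_simps)

lemma rr_linear: "linear (root_refl a)"
  by (rule linearI) (simp_all add: rr_add rr_scale)

lemma rr_inner: assumes "a \<noteq> 0" shows "root_refl a x \<bullet> root_refl a y = x \<bullet> y"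
proof -
  have "a \<bullet> a \<noteq> 0" using assms by simp
  then show ?thesis
    by (simp add: root_refl_def inner_diff_left inner_diff_right algebra_simps
        power2_eq_square field_simps inner_commute)
qed

lemma rr_isom: "a \<noteq> 0 \<Longrightarrow> isom (root_refl a)"
  by (simp add: isom_def rr_linear rr_inner)

lemma rr_self: "a \<noteq> 0 \<Longrightarrow> root_refl a a = - a"
  by (simp add: root_refl_def scaleR_2)

lemma rr_orth: "x \<bullet> a = 0 \<Longrightarrow> root_refl a x = x"
  by (simp add: root_refl_def)

lemma rr_invol: assumes "a \<noteq> 0" shows "root_refl a (root_refl a x) = x"
proof -
  have "a \<bullet> a \<noteq> 0" using assms by simp
  then show ?thesis
    by (simp add: root_refl_def inner_diff_left algebra_simps field_simps)
qed

lemma rr_invol_comp: "a \<noteq> 0 \<Longrightarrow> root_refl a \<circ> root_refl a = id"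
  by (simp add: fun_eq_iff rr_invol)

lemma rr_neg: "root_refl (- a) = root_refl a"
  by (simp add: fun_eq_iff root_refl_def)

lemma rr_inner_a: "a \<noteq> 0 \<Longrightarrow> root_refl a x \<bullet> a = - (x \<bullet> a)"
  by (simp add: root_refl_def inner_diff_left)

lemma isom_comp: "isom u \<Longrightarrow> isom v \<Longrightarrow> isom (u \<circ> v)"
  by (auto simp: isom_def linear_compose)

lemma isom_id: "isom id"
  unfolding isom_def by (auto intro: linearI)

lemma isom_conj: assumes "isom u" shows "u (root_refl a x) = root_refl (u a) (u x)"
proof -
  have l: "linear u" and i: "\<And>x y. u x \<bullet> u y = x \<bullet> y" using assms by (auto simp: isom_def)
  show ?thesis unfolding root_refl_def
    by (simp add: linear_diff[OF l] linear_scale[OF l] i)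
qed

lemma isom_conj_comp: "isom u \<Longrightarrow> u \<circ> root_refl a = root_refl (u a) \<circ> u"
  by (simp add: fun_eq_iff isom_conj)

lemma isom_neg: "isom u \<Longrightarrow> u (- x) = - u x"
  by (simp add: isom_def linear_neg)

lemma isom_inj: assumes "isom u" shows "inj u"
proof (rule injI)
  fix x y assume "u x = u y"
  then have "u (x - y) = 0" using assms by (simp add: isom_def linear_diff)
  moreover have "(x - y) \<bullet> (x - y) = u (x - y) \<bullet> u (x - y)" using assms by (simp add: isom_def)
  ultimately have "(x - y) \<bullet> (x - y) = 0" by simp
  then show "x = y" by simp
qed

lemma sw_Nil[simp]: "simple_word [] = id" by (simp add: simple_word_def)
lemma sw_Cons[simp]: "simple_word (d # ds) = root_refl d \<circ> simple_word ds"
  by (simp add: simple_word_def)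
lemma sw_append: "simple_word (ds @ es) = simple_word ds \<circ> simple_word es"
  by (induction ds) (auto simp: simple_word_def)

lemma sw_isom: "0 \<notin> set ds \<Longrightarrow> isom (simple_word ds)"
  by (induction ds) (auto intro: isom_comp rr_isom simp: isom_id)

lemma sw_rev: "0 \<notin> set ds \<Longrightarrow> simple_word ds \<circ> simple_word (rev ds) = id"
proof (induction ds)
  case Nil then show ?case by simp
next
  case (Cons d ds)
  have h: "\<And>y. simple_word ds (simple_word (rev ds) y) = y" using Cons
    by (metis comp_apply id_apply list.set_intros(2))
  have "d \<noteq> 0" using Cons by auto
  then show ?case using h by (simp add: sw_append fun_eq_iff rr_invol)
qed

lemma sw_rev2: "0 \<notin> set ds \<Longrightarrow> simple_word (rev ds) \<circ> simple_word ds = id"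
  using sw_rev[of "rev ds"] by simp



locale RS =
  fixes Phi Dl :: "'a::euclidean_space set" and ah :: 'a
  assumes rs: "root_system Phi" and red: "reduced_rs Phi" and irr: "irreducible_rs Phi"
    and base: "is_base Phi Dl" and hr: "highest_root Phi Dl ah"
begin

abbreviation "P \<equiv> pos_roots Phi Dl"
abbreviation "cf \<equiv> base_coeff Dl"

lemma finPhi: "finite Phi" using rs by (simp add: root_system_def)
lemma zPhi: "0 \<notin> Phi" using rs by (simp add: root_system_def)
lemma spanPhi: "span Phi = UNIV" using rs by (simp add: root_system_def)
lemma rr_root: "a \<in> Phi \<Longrightarrow> b \<in> Phi \<Longrightarrow> root_refl a b \<in> Phi"
  using rs unfolding root_system_def by blast
lemma cartan: "a \<in> Phi \<Longrightarrow> b \<in> Phi \<Longrightarrow> 2 * (b \<bullet> a) / (a \<bullet> a) \<in> \<int>"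
  using rs unfolding root_system_def by blast
lemma neg_root: "b \<in> Phi \<Longrightarrow> - b \<in> Phi"
  using rr_root[of b b] rr_self[of b] zPhi by force
lemma nz: "b \<in> Phi \<Longrightarrow> b \<noteq> 0" using zPhi by auto
lemma nz2: "b \<in> Phi \<Longrightarrow> b \<bullet> b > 0" using zPhi by auto
lemma reduced: "a \<in> Phi \<Longrightarrow> c *\<^sub>R a \<in> Phi \<Longrightarrow> c = 1 \<or> c = -1"
  using red by (auto simp: reduced_rs_def)

lemma DlPhi: "Dl \<subseteq> Phi" using base by (simp add: is_base_def)
lemma finDl: "finite Dl" using DlPhi finPhi finite_subset by blast
lemma indDl: "independent Dl" using base by (simp add: is_base_def)
lemma Dl_root: "d \<in> Dl \<Longrightarrow> d \<in> Phi" using DlPhi by auto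
lemma Dl_nz: "d \<in> Dl \<Longrightarrow> d \<noteq> 0" using Dl_root nz by auto

lemma nonneg_span: "nonneg_comb Dl v \<Longrightarrow> v \<in> span Dl"
proof -
  assume "nonneg_comb Dl v"
  then obtain c :: "'a \<Rightarrow> nat" where c: "v = (\<Sum>d\<in>Dl. real (c d) *\<^sub>R d)"
    by (auto simp: nonneg_comb_def)
  have "(\<Sum>d\<in>Dl. real (c d) *\<^sub>R d) \<in> span Dl"
    by (rule span_sum) (auto intro: span_scale span_base)
  then show ?thesis using c by simp
qed

lemma spanDl: "span Dl = UNIV"
proof -
  have "Phi \<subseteq> span Dl"
  proof
    fix b assume "b \<in> Phi"
    then have "nonneg_comb Dl b \<or> nonneg_comb Dl (- b)" using base by (simp add: is_base_def)
    then show "b \<in> span Dl" using nonneg_span span_neg by fastforce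
  qed
  then have "span Phi \<subseteq> span Dl" by (simp add: span_minimal)
  then show ?thesis using spanPhi by auto
qed

lemma coeff_uniq:
  assumes "(\<Sum>d\<in>Dl. c d *\<^sub>R d) = (\<Sum>d\<in>Dl. e d *\<^sub>R d)" and "d \<in> Dl"
  shows "c d = e d"
proof -
  have "(\<Sum>d\<in>Dl. (c d - e d) *\<^sub>R d) = 0"
    using assms(1) by (simp add: scaleR_diff_left sum_subtractf)
  then show ?thesis using indDl assms(2) unfolding independent_explicit by fastforce
qed

lemma cf_ex: "\<exists>c. (\<forall>d. d \<notin> Dl \<longrightarrow> c d = 0) \<and> v = (\<Sum>d\<in>Dl. c d *\<^sub>R d)"
proof -
  have "v \<in> span Dl" using spanDl by auto
  then obtain u where u: "v = (\<Sum>d\<in>Dl. u d *\<^sub>R d)" using span_finite[OF finDl] by auto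
  show ?thesis
    by (rule exI[of _ "\<lambda>d. if d \<in> Dl then u d else 0"]) (simp add: u)
qed

lemma cf_char:
  "(\<forall>d. d \<notin> Dl \<longrightarrow> cf v d = 0) \<and> v = (\<Sum>d\<in>Dl. cf v d *\<^sub>R d)"
proof -
  have "\<exists>!c. (\<forall>d. d \<notin> Dl \<longrightarrow> c d = 0) \<and> v = (\<Sum>d\<in>Dl. c d *\<^sub>R d)"
  proof (rule ex_ex1I)
    show "\<exists>c. (\<forall>d. d \<notin> Dl \<longrightarrow> c d = 0) \<and> v = (\<Sum>d\<in>Dl. c d *\<^sub>R d)" by (rule cf_ex)
  next
    fix c e assume c: "(\<forall>d. d \<notin> Dl \<longrightarrow> c d = 0) \<and> v = (\<Sum>d\<in>Dl. c d *\<^sub>R d)"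
      and e: "(\<forall>d. d \<notin> Dl \<longrightarrow> e d = 0) \<and> v = (\<Sum>d\<in>Dl. e d *\<^sub>R d)"
    show "c = e"
    proof
      fix d show "c d = e d"
        using c e coeff_uniq[of c e d] by (cases "d \<in> Dl") auto
    qed
  qed
  then show ?thesis unfolding base_coeff_def by (rule theI')
qed

lemma cf_out: "d \<notin> Dl \<Longrightarrow> cf v d = 0" using cf_char by blast
lemma cf_repr: "v = (\<Sum>d\<in>Dl. cf v d *\<^sub>R d)" using cf_char by blast

lemma cf_eq:
  assumes "\<forall>d. d \<notin> Dl \<longrightarrow> c d = 0" and "v = (\<Sum>d\<in>Dl. c d *\<^sub>R d)"
  shows "cf v = c"
proof
  fix d show "cf v d = c d"
  proof (cases "d \<in> Dl")
    case True then show ?thesis using coeff_uniq[of "cf v" c d] cf_repr[of v] assms by simp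
  next
    case False then show ?thesis using assms cf_out by simp
  qed
qed

lemma cf_add: "cf (x + y) d = cf x d + cf y d"
proof -
  have "cf (x + y) = (\<lambda>d. cf x d + cf y d)"
    apply (rule cf_eq)
    using cf_out apply simp
    apply (subst cf_repr[of x], subst cf_repr[of y])
    by (simp add: scaleR_add_left sum.distrib)
  then show ?thesis by simp
qed

lemma cf_scale: "cf (c *\<^sub>R x) d = c * cf x d"
proof -
  have "cf (c *\<^sub>R x) = (\<lambda>d. c * cf x d)"
    apply (rule cf_eq)
    using cf_out apply simp
    apply (subst cf_repr[of x])
    by (simp add: scaleR_sum_right)
  then show ?thesis by simp
qed

lemma cf_neg: "cf (- x) d = - cf x d"
  using cf_scale[of "-1" x d] by simp

lemma cf_diff: "cf (x - y) d = cf x d - cf y d"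
  using cf_add[of x "- y" d] cf_neg[of y d] by simp

lemma cf_sum: "cf (\<Sum>i\<in>A. f i) d = (\<Sum>i\<in>A. cf (f i) d)"
proof (induction A rule: infinite_finite_induct)
  case (infinite A)
  then show ?case using cf_scale[of 0 0 d] by simp
next
  case empty then show ?case using cf_scale[of 0 0 d] by simp
next
  case (insert x F) then show ?case by (simp add: cf_add)
qed

lemma cf_simple: "e \<in> Dl \<Longrightarrow> cf e d = (if d = e then 1 else 0)"
proof -
  assume e: "e \<in> Dl"
  have "cf e = (\<lambda>d. if d = e then 1 else 0)"
  proof (rule cf_eq)
    show "\<forall>d. d \<notin> Dl \<longrightarrow> (if d = e then 1 else 0) = (0::real)" using e by auto
    have "(\<Sum>d\<in>Dl. (if d = e then 1 else 0::real) *\<^sub>R d) = (\<Sum>d\<in>Dl. if d = e then d else 0)"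
      by (rule sum.cong) auto
    also have "\<dots> = e" using e finDl by simp
    finally show "e = (\<Sum>d\<in>Dl. (if d = e then 1 else 0::real) *\<^sub>R d)" by simp
  qed
  then show ?thesis by simp
qed

lemma cf_zero_iff: "(\<forall>d\<in>Dl. cf v d = 0) \<Longrightarrow> v = 0"
  using cf_repr[of v] by (simp)

lemma inner_cf: "x \<bullet> v = (\<Sum>d\<in>Dl. cf v d * (x \<bullet> d))"
  by (subst cf_repr[of v]) (simp add: inner_sum_right)

lemma nonneg_cf: assumes "nonneg_comb Dl v" shows "0 \<le> cf v d"
proof -
  obtain c :: "'a \<Rightarrow> nat" where c: "v = (\<Sum>d\<in>Dl. real (c d) *\<^sub>R d)"
    using assms by (auto simp: nonneg_comb_def)
  have "cf v = (\<lambda>d. if d \<in> Dl then real (c d) else 0)"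
    by (rule cf_eq) (simp_all add: c cong: sum.cong)
  then show ?thesis by simp
qed

lemma pos_cf: "b \<in> P \<Longrightarrow> 0 \<le> cf b d"
  by (auto simp: pos_roots_def nonneg_cf)

lemma pos_root: "b \<in> P \<Longrightarrow> b \<in> Phi" by (simp add: pos_roots_def)

lemma root_cases: "b \<in> Phi \<Longrightarrow> b \<in> P \<or> - b \<in> P"
  using base neg_root by (auto simp: is_base_def pos_roots_def)

lemma pos_nz_cf: assumes "b \<in> P" shows "\<exists>d\<in>Dl. cf b d > 0"
proof (rule ccontr)
  assume "\<not> ?thesis"
  then have "\<forall>d\<in>Dl. cf b d = 0" using pos_cf[OF assms] by (metis antisym not_less)
  then have "b = 0" by (rule cf_zero_iff)
  then show False using assms nz pos_root by auto
qed

lemma neg_notpos: assumes "b \<in> P" shows "- b \<notin> P"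
proof
  assume "- b \<in> P"
  then have "\<forall>d\<in>Dl. cf b d \<le> 0" using pos_cf[of "-b"] cf_neg by fastforce
  then show False using pos_nz_cf[OF assms] by force
qed

lemma notpos_cf: "b \<in> Phi \<Longrightarrow> b \<notin> P \<Longrightarrow> cf b d \<le> 0"
  using root_cases[of b] pos_cf[of "-b" d] cf_neg[of b d] by auto

lemma pos_of_cf: "b \<in> Phi \<Longrightarrow> d \<in> Dl \<Longrightarrow> cf b d > 0 \<Longrightarrow> b \<in> P"
  using notpos_cf[of b d] by force

lemma pos_of_all: assumes "b \<in> Phi" "\<forall>d\<in>Dl. 0 \<le> cf b d" shows "b \<in> P"
proof (rule ccontr)
  assume "b \<notin> P"
  then have "\<forall>d\<in>Dl. cf b d = 0" using assms notpos_cf by (meson order_antisym)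
  then show False using cf_zero_iff assms nz by blast
qed

lemma Dl_pos: "d \<in> Dl \<Longrightarrow> d \<in> P"
  using pos_of_cf[of d d] cf_simple[of d d] Dl_root by simp

lemma notpos_neg: "b \<in> Phi \<Longrightarrow> b \<notin> P \<Longrightarrow> - b \<in> P"
  using root_cases by blast

end



context RS begin

abbreviation "W \<equiv> weyl_group Phi"

lemma W_isom: "w \<in> W \<Longrightarrow> isom w"
proof (induction rule: weyl_group.induct)
  case wg_id show ?case by (rule isom_id)
next
  case (wg_step a w) then show ?case using isom_comp rr_isom nz by blast
qed

lemma W_Phi: "w \<in> W \<Longrightarrow> b \<in> Phi \<Longrightarrow> w b \<in> Phi"
  by (induction arbitrary: b rule: weyl_group.induct) (auto intro: rr_root)

lemma W_inj: "w \<in> W \<Longrightarrow> inj w" using W_isom isom_inj by blast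
lemma W_neg: "w \<in> W \<Longrightarrow> w (- x) = - w x" using W_isom isom_neg by blast
lemma W_inner: "w \<in> W \<Longrightarrow> w x \<bullet> w y = x \<bullet> y" using W_isom by (simp add: isom_def)

lemma sw_W: "set ds \<subseteq> Dl \<Longrightarrow> simple_word ds \<in> W"
  by (induction ds) (auto intro: weyl_group.intros Dl_root)

lemma sw_isom': "set ds \<subseteq> Dl \<Longrightarrow> isom (simple_word ds)"
  using sw_W W_isom by blast

lemma rr_expand: "root_refl d b = b - (2 * (b \<bullet> d) / (d \<bullet> d)) *\<^sub>R d"
  by (simp add: root_refl_def)

lemma cf_rr: "e \<in> Dl \<Longrightarrow> cf (root_refl e b) d = cf b d - (2 * (b \<bullet> e) / (e \<bullet> e)) * (if d = e then 1 else 0)"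
  by (simp add: rr_expand cf_diff cf_scale cf_simple)

lemma pos_other:
  assumes "b \<in> P" "d \<in> Dl" "b \<noteq> d"
  shows "\<exists>e\<in>Dl. e \<noteq> d \<and> cf b e > 0"
proof (rule ccontr)
  assume "\<not> ?thesis"
  then have z: "\<forall>e\<in>Dl. e \<noteq> d \<longrightarrow> cf b e = 0" using pos_cf[OF assms(1)] by (metis antisym not_less)
  have "b = (\<Sum>e\<in>Dl. cf b e *\<^sub>R e)" by (rule cf_repr)
  also have "\<dots> = (\<Sum>e\<in>Dl. if e = d then cf b d *\<^sub>R d else 0)"
    by (rule sum.cong) (auto simp: z)
  also have "\<dots> = cf b d *\<^sub>R d" using assms(2) finDl by simp
  finally have b: "b = cf b d *\<^sub>R d" .
  then have "cf b d = 1 \<or> cf b d = -1" using reduced[of d "cf b d"] assms Dl_root pos_root by auto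
  moreover have "cf b d \<ge> 0" using pos_cf assms by auto
  ultimately have "cf b d = 1" by auto
  then show False using b assms by simp
qed

lemma S: assumes "d \<in> Dl" "b \<in> P" "b \<noteq> d" shows "root_refl d b \<in> P"
proof -
  obtain e where e: "e \<in> Dl" "e \<noteq> d" "cf b e > 0" using pos_other assms by blast
  have "cf (root_refl d b) e = cf b e" using cf_rr[OF assms(1)] e by simp
  then show ?thesis using pos_of_cf[of _ e] e rr_root Dl_root pos_root assms by auto
qed

lemma S2: assumes "d \<in> Dl" "x \<in> Phi"
  shows "root_refl d x \<in> P \<longleftrightarrow> (x \<in> P \<and> x \<noteq> d) \<or> x = - d"
proof -
  have dn: "d \<noteq> 0" using assms Dl_nz by auto
  show ?thesis
  proof (cases "x \<in> P")
    case True
    then show ?thesis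
    proof (cases "x = d")
      case True
      have "root_refl d x = - d" using True rr_self[OF dn] by simp
      moreover have "- d \<notin> P" using neg_notpos Dl_pos assms by auto
      moreover have "d \<noteq> - d"
      proof
        assume h: "d = - d"
        have "d + d = d + - d" using arg_cong[OF h, of "\<lambda>x. d + x"] by simp
        then have "(2::real) *\<^sub>R d = 0" by (simp add: scaleR_2)
        then show False using dn by simp
      qed
      ultimately show ?thesis using True by simp
    next
      case False then show ?thesis using S assms \<open>x \<in> P\<close> by auto
    qed
  next
    case False
    then have nx: "- x \<in> P" using notpos_neg assms by auto
    show ?thesis
    proof (cases "x = - d")
      case True
      have "root_refl d x = d" using True rr_scale[of d "-1" d] rr_self[OF dn] by simp
      then show ?thesis using True Dl_pos assms by simp
    next
      case F2: False
      then have "- x \<noteq> d" by auto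
      then have "root_refl d (- x) \<in> P" using S assms nx by auto
      then have "root_refl d x \<notin> P" using neg_notpos rr_scale[of d "-1" x] by fastforce
      then show ?thesis using F2 False by auto
    qed
  qed
qed

definition inv_set :: "('a \<Rightarrow> 'a) \<Rightarrow> 'a set" where
  "inv_set w = {b \<in> P. w b \<notin> P}"

definition NN :: "('a \<Rightarrow> 'a) \<Rightarrow> nat" where
  "NN w = card (inv_set w)"

lemma finP: "finite P" unfolding pos_roots_def using finPhi by simp
lemma fin_inv: "finite (inv_set w)" using finP by (simp add: inv_set_def)

lemma LM:
  assumes w: "w \<in> W" and d: "d \<in> Dl" and g: "g \<in> Phi" "w g = d"
  shows "(g \<in> P \<longrightarrow> NN (root_refl d \<circ> w) = NN w + 1) \<and> (g \<notin> P \<longrightarrow> NN (root_refl d \<circ> w) + 1 = NN w)"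
proof -
  have inj: "inj w" using W_inj w by auto
  have wng: "w (- g) = - d" using W_neg w g by auto
  have eq: "inv_set (root_refl d \<circ> w) = {b \<in> P. (w b \<notin> P \<or> b = g) \<and> b \<noteq> - g}"
  proof -
    { fix b assume b: "b \<in> P"
      then have wb: "w b \<in> Phi" using W_Phi w pos_root by auto
      have "root_refl d (w b) \<in> P \<longleftrightarrow> (w b \<in> P \<and> w b \<noteq> d) \<or> w b = - d" using S2[OF d wb] .
      moreover have "w b = d \<longleftrightarrow> b = g" using inj g by (metis injD)
      moreover have "w b = - d \<longleftrightarrow> b = - g" using inj wng by (metis injD)
      moreover have "w g \<in> P" using g d Dl_pos by auto
      ultimately have "root_refl d (w b) \<notin> P \<longleftrightarrow> (w b \<notin> P \<or> b = g) \<and> b \<noteq> - g" by auto }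
    then show ?thesis unfolding inv_set_def by auto
  qed
  have c1: "g \<in> P \<Longrightarrow> NN (root_refl d \<circ> w) = NN w + 1"
  proof -
    assume gp: "g \<in> P"
    then have "-g \<notin> P" using neg_notpos by auto
    then have "{b \<in> P. (w b \<notin> P \<or> b = g) \<and> b \<noteq> - g} = insert g (inv_set w)"
      using gp unfolding inv_set_def by auto
    then have "inv_set (root_refl d \<circ> w) = insert g (inv_set w)" using eq by simp
    moreover have "g \<notin> inv_set w" using g d Dl_pos by (auto simp: inv_set_def)
    ultimately show ?thesis unfolding NN_def using fin_inv by simp
  qed
  have c2: "g \<notin> P \<Longrightarrow> NN (root_refl d \<circ> w) + 1 = NN w"
  proof -
    assume gp: "g \<notin> P"
    then have ng: "-g \<in> P" using notpos_neg g by auto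
    have "{b \<in> P. (w b \<notin> P \<or> b = g) \<and> b \<noteq> - g} = inv_set w - {-g}"
      using gp unfolding inv_set_def by auto
    then have "inv_set (root_refl d \<circ> w) = inv_set w - {-g}" using eq by simp
    moreover have "-g \<in> inv_set w" using ng wng neg_notpos d Dl_pos by (auto simp: inv_set_def)
    ultimately show ?thesis unfolding NN_def using card.remove[OF fin_inv[of w] \<open>-g \<in> inv_set w\<close>] by simp
  qed
  show ?thesis using c1 c2 by blast
qed

lemma RM:
  assumes w: "w \<in> W" and d: "d \<in> Dl"
  shows "(w d \<in> P \<longrightarrow> NN (w \<circ> root_refl d) = NN w + 1) \<and> (w d \<notin> P \<longrightarrow> NN (w \<circ> root_refl d) + 1 = NN w)"
proof -
  have dn: "d \<noteq> 0" using d Dl_nz by auto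
  have injs: "inj (root_refl d)" using isom_inj rr_isom dn by blast
  have eq: "inv_set (w \<circ> root_refl d) = root_refl d ` {x \<in> Phi. ((x \<in> P \<and> x \<noteq> d) \<or> x = - d) \<and> w x \<notin> P}"
  proof -
    { fix b
      have "b \<in> inv_set (w \<circ> root_refl d) \<longleftrightarrow> (\<exists>x. b = root_refl d x \<and> x \<in> Phi \<and> ((x \<in> P \<and> x \<noteq> d) \<or> x = - d) \<and> w x \<notin> P)"
      proof
        assume b: "b \<in> inv_set (w \<circ> root_refl d)"
        then have bP: "b \<in> P" "w (root_refl d b) \<notin> P" by (auto simp: inv_set_def)
        let ?x = "root_refl d b"
        have xP: "?x \<in> Phi" using bP rr_root d Dl_root pos_root by auto
        have "root_refl d ?x \<in> P" using bP rr_invol[OF dn, of b] by simp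
        then show "\<exists>x. b = root_refl d x \<and> x \<in> Phi \<and> ((x \<in> P \<and> x \<noteq> d) \<or> x = - d) \<and> w x \<notin> P"
          using S2[OF d xP] xP bP rr_invol[OF dn, of b] by (intro exI[of _ ?x]) auto
      next
        assume "\<exists>x. b = root_refl d x \<and> x \<in> Phi \<and> ((x \<in> P \<and> x \<noteq> d) \<or> x = - d) \<and> w x \<notin> P"
        then obtain x where x: "b = root_refl d x" "x \<in> Phi" "(x \<in> P \<and> x \<noteq> d) \<or> x = - d" "w x \<notin> P" by blast
        then have "b \<in> P" using S2[OF d x(2)] by auto
        then show "b \<in> inv_set (w \<circ> root_refl d)" using x rr_invol[OF dn] by (auto simp: inv_set_def)
      qed }
    then show ?thesis by blast
  qed
  have card_eq: "NN (w \<circ> root_refl d) = card {x \<in> Phi. ((x \<in> P \<and> x \<noteq> d) \<or> x = - d) \<and> w x \<notin> P}"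
    unfolding NN_def eq by (rule card_image) (rule inj_on_subset[OF injs], simp)
  have dP: "d \<in> P" "d \<in> Phi" using d Dl_pos Dl_root by auto
  have mdn: "-d \<notin> P" using neg_notpos dP by auto
  have c1: "w d \<in> P \<Longrightarrow> NN (w \<circ> root_refl d) = NN w + 1"
  proof -
    assume wd: "w d \<in> P"
    have "- w d \<notin> P" using wd neg_notpos by auto
    then have "w (-d) \<notin> P" using W_neg[OF w] by simp
    moreover have "-d \<in> Phi" using neg_root dP by auto
    ultimately have A: "{x \<in> Phi. ((x \<in> P \<and> x \<noteq> d) \<or> x = - d) \<and> w x \<notin> P} = insert (-d) (inv_set w)"
      unfolding inv_set_def using pos_root wd by auto
    have B: "-d \<notin> inv_set w" using mdn by (auto simp: inv_set_def)
    have "NN (w \<circ> root_refl d) = card (insert (-d) (inv_set w))" using card_eq A by simp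
    then show ?thesis unfolding NN_def using fin_inv[of w] B by simp
  qed
  have c2: "w d \<notin> P \<Longrightarrow> NN (w \<circ> root_refl d) + 1 = NN w"
  proof -
    assume wd: "w d \<notin> P"
    have "w d \<in> Phi" using W_Phi w dP by auto
    then have "- w d \<in> P" using notpos_neg wd by auto
    then have "w (-d) \<in> P" using W_neg[OF w] by simp
    then have A: "{x \<in> Phi. ((x \<in> P \<and> x \<noteq> d) \<or> x = - d) \<and> w x \<notin> P} = inv_set w - {d}"
      unfolding inv_set_def using pos_root by auto
    have B: "d \<in> inv_set w" using wd dP by (auto simp: inv_set_def)
    have "NN (w \<circ> root_refl d) = card (inv_set w - {d})" using card_eq A by simp
    moreover have "card (inv_set w) = Suc (card (inv_set w - {d}))" by (rule card.remove[OF fin_inv B])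
    ultimately show ?thesis unfolding NN_def by simp
  qed
  show ?thesis using c1 c2 by blast
qed

end



context RS begin

definition ht :: "'a \<Rightarrow> real" where "ht v = (\<Sum>d\<in>Dl. cf v d)"

lemma ht_pos: assumes "b \<in> P" shows "ht b > 0"
proof -
  obtain e where e: "e \<in> Dl" "cf b e > 0" using pos_nz_cf assms by blast
  have "ht b = cf b e + (\<Sum>d\<in>Dl - {e}. cf b d)" unfolding ht_def using e finDl
    by (simp add: sum.remove)
  moreover have "(\<Sum>d\<in>Dl - {e}. cf b d) \<ge> 0" using pos_cf[OF assms] by (simp add: sum_nonneg)
  ultimately show ?thesis using e by simp
qed

lemma ht_rr: assumes "e \<in> Dl" shows "ht (root_refl e b) = ht b - 2 * (b \<bullet> e) / (e \<bullet> e)"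
proof -
  have "ht (root_refl e b) = (\<Sum>d\<in>Dl. cf b d - (2 * (b \<bullet> e) / (e \<bullet> e)) * (if d = e then 1 else 0))"
    unfolding ht_def using cf_rr[OF assms] by simp
  also have "\<dots> = ht b - (\<Sum>d\<in>Dl. (2 * (b \<bullet> e) / (e \<bullet> e)) * (if d = e then 1 else 0))"
    unfolding ht_def by (simp add: sum_subtractf)
  also have "(\<Sum>d\<in>Dl. (2 * (b \<bullet> e) / (e \<bullet> e)) * (if d = e then 1 else 0)) = 2 * (b \<bullet> e) / (e \<bullet> e)"
    using assms finDl by (simp add: if_distrib[of "\<lambda>x. _ * x"] sum.delta cong: if_cong)
  finally show ?thesis .
qed

lemma exists_pos_inner:
  assumes "b \<in> P" shows "\<exists>d\<in>Dl. b \<bullet> d > 0"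
proof (rule ccontr)
  assume "\<not> ?thesis"
  then have "\<forall>d\<in>Dl. b \<bullet> d \<le> 0" by auto
  then have "b \<bullet> b \<le> 0" using inner_cf[of b b] pos_cf[OF assms]
    by (simp add: sum_nonpos mult_nonneg_nonpos)
  then show False using nz2 pos_root assms by fastforce
qed

lemma int_ge1: "(x::real) \<in> \<int> \<Longrightarrow> x > 0 \<Longrightarrow> x \<ge> 1"
proof -
  assume "x \<in> \<int>" "x > 0"
  then obtain n :: int where n: "x = of_int n" by (auto elim: Ints_cases)
  then have "n > 0" using \<open>x > 0\<close> by simp
  then have "n \<ge> 1" by simp
  then show ?thesis using n by simp
qed

lemma G1: "b \<in> P \<Longrightarrow> \<exists>ds e. set ds \<subseteq> Dl \<and> e \<in> Dl \<and> b = simple_word ds e"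
proof (induction "nat \<lceil>ht b\<rceil>" arbitrary: b rule: less_induct)
  case less
  show ?case
  proof (cases "b \<in> Dl")
    case True then show ?thesis by (intro exI[of _ "[]"] exI[of _ b]) simp
  next
    case False
    obtain d where d: "d \<in> Dl" "b \<bullet> d > 0" using exists_pos_inner less.prems by blast
    have bd: "b \<noteq> d" using False d by auto
    let ?b = "root_refl d b"
    have bP: "?b \<in> P" using S d bd less.prems by auto
    have k: "2 * (b \<bullet> d) / (d \<bullet> d) \<ge> 1"
      using int_ge1 cartan[of d b] Dl_root d less.prems pos_root nz2 by auto
    have "ht ?b \<le> ht b - 1" using ht_rr[OF d(1)] k by simp
    moreover have "ht ?b > 0" using ht_pos bP by auto
    ultimately have "nat \<lceil>ht ?b\<rceil> < nat \<lceil>ht b\<rceil>" by linarith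
    then obtain ds e where "set ds \<subseteq> Dl" "e \<in> Dl" "?b = simple_word ds e"
      using less.hyps bP by blast
    moreover have "b = root_refl d ?b" using rr_invol[of d b] Dl_nz[OF d(1)] by simp
    ultimately show ?thesis using d by (intro exI[of _ "d # ds"] exI[of _ e]) auto
  qed
qed

lemma sw_nz: "set ds \<subseteq> Dl \<Longrightarrow> 0 \<notin> set ds" using Dl_nz by auto

lemma G2: assumes "a \<in> Phi" shows "\<exists>ds. set ds \<subseteq> Dl \<and> root_refl a = simple_word ds"
proof -
  obtain b where b: "b \<in> P" "root_refl a = root_refl b"
    using root_cases[OF assms] rr_neg by (metis minus_minus)
  obtain ds e where de: "set ds \<subseteq> Dl" "e \<in> Dl" "b = simple_word ds e" using G1 b by blast
  let ?u = "simple_word ds"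
  have iu: "isom ?u" using sw_isom' de by auto
  have "root_refl b = root_refl b \<circ> (?u \<circ> simple_word (rev ds))" using sw_rev[OF sw_nz[OF de(1)]] by simp
  also have "\<dots> = (root_refl (?u e) \<circ> ?u) \<circ> simple_word (rev ds)" using de by (simp add: comp_assoc)
  also have "\<dots> = (?u \<circ> root_refl e) \<circ> simple_word (rev ds)" using isom_conj_comp[OF iu] by simp
  also have "\<dots> = simple_word (ds @ e # rev ds)" by (simp add: sw_append comp_assoc)
  finally show ?thesis using b de by (intro exI[of _ "ds @ e # rev ds"]) auto
qed

lemma W_iff: "w \<in> W \<longleftrightarrow> (\<exists>ds. set ds \<subseteq> Dl \<and> w = simple_word ds)"
proof
  assume "w \<in> W"
  then show "\<exists>ds. set ds \<subseteq> Dl \<and> w = simple_word ds"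
  proof (induction rule: weyl_group.induct)
    case wg_id then show ?case by (intro exI[of _ "[]"]) simp
  next
    case (wg_step a w)
    then obtain ds es where "set ds \<subseteq> Dl" "w = simple_word ds" "set es \<subseteq> Dl" "root_refl a = simple_word es"
      using G2 by blast
    then show ?case by (intro exI[of _ "es @ ds"]) (simp add: sw_append)
  qed
next
  assume "\<exists>ds. set ds \<subseteq> Dl \<and> w = simple_word ds"
  then show "w \<in> W" using sw_W by auto
qed

lemma W_inverse: assumes "w \<in> W" shows "\<exists>v\<in>W. v \<circ> w = id \<and> w \<circ> v = id"
proof -
  obtain ds where ds: "set ds \<subseteq> Dl" "w = simple_word ds" using W_iff assms by auto
  show ?thesis using ds sw_rev sw_rev2 sw_nz sw_W[of "rev ds"]
    by (intro bexI[of _ "simple_word (rev ds)"]) auto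
qed

lemma W_rmul: "w \<in> W \<Longrightarrow> d \<in> Dl \<Longrightarrow> w \<circ> root_refl d \<in> W"
proof -
  assume "w \<in> W" "d \<in> Dl"
  then obtain ds where "set ds \<subseteq> Dl" "w = simple_word ds" using W_iff by auto
  then show ?thesis using \<open>d \<in> Dl\<close> W_iff[of "w \<circ> root_refl d"]
    by (metis (no_types, lifting) Un_subset_iff empty_set empty_subsetI list.simps(15) set_append
        insert_subset sw_Cons sw_Nil sw_append comp_id)
qed

lemma W_lmul: "w \<in> W \<Longrightarrow> d \<in> Dl \<Longrightarrow> root_refl d \<circ> w \<in> W"
  using weyl_group.wg_step Dl_root by blast

lemma D:
  assumes "set ds \<subseteq> Dl" "d \<in> Dl" "simple_word ds d \<notin> P"
  shows "\<exists>es. set es \<subseteq> Dl \<and> length es < length ds \<and> simple_word ds \<circ> root_refl d = simple_word es"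
  using assms
proof (induction ds)
  case Nil then show ?case using Dl_pos by simp
next
  case (Cons e ds)
  let ?u = "simple_word ds"
  show ?case
  proof (cases "?u d \<in> P")
    case False
    have "\<exists>es. set es \<subseteq> Dl \<and> length es < length ds \<and> ?u \<circ> root_refl d = simple_word es"
      using Cons.IH Cons.prems False by (simp add: comp_def)
    then obtain es where es: "set es \<subseteq> Dl" "length es < length ds" "?u \<circ> root_refl d = simple_word es"
      by blast
    have "simple_word (e # ds) \<circ> root_refl d = root_refl e \<circ> (?u \<circ> root_refl d)" by (simp add: comp_assoc)
    also have "\<dots> = simple_word (e # es)" by (simp only: es(3) sw_Cons)
    finally have eq: "simple_word (e # ds) \<circ> root_refl d = simple_word (e # es)" .
    have "set (e # es) \<subseteq> Dl" "length (e # es) < length (e # ds)" using Cons.prems es by auto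
    then show ?thesis using eq by blast
  next
    case True
    have ud: "?u d \<in> Phi" using pos_root True by auto
    have "root_refl e (?u d) \<notin> P" using Cons.prems by simp
    then have "?u d = e" using S2[of e "?u d"] Cons.prems True ud by auto
    have iu: "isom ?u" using sw_isom' Cons.prems by auto
    have "simple_word (e # ds) \<circ> root_refl d = root_refl e \<circ> (?u \<circ> root_refl d)" by (simp add: comp_assoc)
    also have "\<dots> = root_refl e \<circ> (root_refl e \<circ> ?u)" using isom_conj_comp[OF iu] \<open>?u d = e\<close> by simp
    also have "\<dots> = ?u" using rr_invol_comp[of e] Dl_nz Cons.prems by (simp add: comp_assoc[symmetric])
    finally have eq: "simple_word (e # ds) \<circ> root_refl d = simple_word ds" .
    have "set ds \<subseteq> Dl" "length ds < length (e # ds)" using Cons.prems by auto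
    then show ?thesis using eq by blast
  qed
qed

lemma H: assumes w: "w \<in> W" and pos: "\<forall>d\<in>Dl. w d \<in> P" shows "w = id"
proof -
  have ex: "\<exists>ds. set ds \<subseteq> Dl \<and> w = simple_word ds" using W_iff w by auto
  obtain ds where ds: "set ds \<subseteq> Dl" "w = simple_word ds"
    and min: "\<And>es. set es \<subseteq> Dl \<Longrightarrow> w = simple_word es \<Longrightarrow> length ds \<le> length es"
  proof -
    obtain ds0 where "set ds0 \<subseteq> Dl \<and> w = simple_word ds0" using ex by blast
    from ex_has_least_nat[of "\<lambda>ds. set ds \<subseteq> Dl \<and> w = simple_word ds", OF this, of length]
    show ?thesis using that by blast
  qed
  show ?thesis
  proof (cases ds rule: rev_cases)
    case Nil then show ?thesis using ds by simp
  next
    case (snoc es d)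
    have d: "d \<in> Dl" and es: "set es \<subseteq> Dl" using ds snoc by auto
    have w_eq: "w = simple_word es \<circ> root_refl d" using ds snoc by (simp add: sw_append)
    have "simple_word es = w \<circ> root_refl d" using w_eq rr_invol_comp[of d] Dl_nz d
      by (simp add: comp_assoc)
    then have "simple_word es d = w (- d)" using rr_self[OF Dl_nz[OF d]] by simp
    also have "\<dots> = - w d" using W_neg w by simp
    finally have "simple_word es d \<notin> P" using neg_notpos pos d by simp
    then obtain fs where "set fs \<subseteq> Dl" "length fs < length es" "simple_word es \<circ> root_refl d = simple_word fs"
      using D es d by blast
    then show ?thesis using min[of fs] w_eq snoc by simp
  qed
qed

lemma pos_comb:
  assumes "linear w" "b \<in> P" "w b \<in> Phi" "\<forall>d\<in>Dl. cf b d \<noteq> 0 \<longrightarrow> w d \<in> P"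
  shows "w b \<in> P"
proof (rule pos_of_all[OF assms(3)], intro ballI)
  fix e assume "e \<in> Dl"
  have "w b = (\<Sum>d\<in>Dl. cf b d *\<^sub>R w d)"
    by (subst cf_repr[of b]) (simp add: linear_sum[OF assms(1)] linear_scale[OF assms(1)])
  then have "cf (w b) e = (\<Sum>d\<in>Dl. cf b d * cf (w d) e)" by (simp add: cf_sum cf_scale)
  also have "\<dots> \<ge> 0"
    by (rule sum_nonneg) (metis assms(2,4) mult_eq_0_iff mult_nonneg_nonneg order_refl pos_cf)
  finally show "0 \<le> cf (w b) e" .
qed

lemma W_linear: "w \<in> W \<Longrightarrow> linear w" using W_isom by (simp add: isom_def)

lemma NN_zero_iff: assumes "w \<in> W" shows "NN w = 0 \<longleftrightarrow> (\<forall>d\<in>Dl. w d \<in> P)"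
proof
  assume "NN w = 0"
  then have "inv_set w = {}" using fin_inv by (simp add: NN_def)
  then show "\<forall>d\<in>Dl. w d \<in> P" using Dl_pos by (auto simp: inv_set_def)
next
  assume h: "\<forall>d\<in>Dl. w d \<in> P"
  have "inv_set w = {}" unfolding inv_set_def
    using pos_comb[OF W_linear[OF assms]] h W_Phi[OF assms] pos_root by blast
  then show "NN w = 0" by (simp add: NN_def)
qed

lemma NN_id: "NN id = 0" unfolding NN_def inv_set_def by simp

lemma NN_le_length: "set ds \<subseteq> Dl \<Longrightarrow> NN (simple_word ds) \<le> length ds"
proof (induction ds)
  case Nil then show ?case by (simp only: sw_Nil NN_id list.size(3) order_refl)
next
  case (Cons d ds)
  let ?u = "simple_word ds"
  have d: "d \<in> Dl" and u: "?u \<in> W" using Cons.prems sw_W by auto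
  let ?g = "simple_word (rev ds) d"
  have g: "?g \<in> Phi" using sw_W[of "rev ds"] Cons.prems W_Phi Dl_root d by auto
  have ds: "set ds \<subseteq> Dl" using Cons.prems by auto
  have "?u ?g = (?u \<circ> simple_word (rev ds)) d" by simp
  also have "\<dots> = d" using sw_rev[OF sw_nz[OF ds]] by simp
  finally have ug: "?u ?g = d" .
  have "NN (root_refl d \<circ> ?u) \<le> NN ?u + 1" using LM[OF u d g ug] by (cases "?g \<in> P") auto
  then show ?case using Cons by (simp add: comp_def)
qed

lemma word_of_NN: "w \<in> W \<Longrightarrow> \<exists>ds. set ds \<subseteq> Dl \<and> length ds = NN w \<and> simple_word ds = w"
proof (induction "NN w" arbitrary: w rule: less_induct)
  case less
  show ?case
  proof (cases "\<forall>d\<in>Dl. w d \<in> P")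
    case True
    then have "w = id" using H less.prems by auto
    then show ?thesis by (intro exI[of _ "[]"]) (simp add: NN_id)
  next
    case False
    then obtain d where d: "d \<in> Dl" "w d \<notin> P" by auto
    let ?w = "w \<circ> root_refl d"
    have w': "?w \<in> W" using W_rmul less.prems d by auto
    have "?w d = - w d" using rr_self[OF Dl_nz[OF d(1)]] W_neg[OF less.prems] by simp
    moreover have "w d \<in> Phi" using W_Phi less.prems Dl_root d by auto
    ultimately have "?w d \<in> P" using notpos_neg d by simp
    then have "NN (?w \<circ> root_refl d) = NN ?w + 1" using RM[OF w' d(1)] by simp
    moreover have "?w \<circ> root_refl d = w" using rr_invol_comp[of d] Dl_nz d by (simp add: comp_assoc)
    ultimately have lt: "NN ?w < NN w" by simp
    obtain es where es: "set es \<subseteq> Dl" "length es = NN ?w" "simple_word es = ?w"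
      using less.hyps[OF lt w'] by blast
    have "simple_word (es @ [d]) = w" using es \<open>?w \<circ> root_refl d = w\<close> by (simp add: sw_append)
    then show ?thesis using es d \<open>NN (?w \<circ> root_refl d) = NN ?w + 1\<close> \<open>?w \<circ> root_refl d = w\<close>
      by (intro exI[of _ "es @ [d]"]) auto
  qed
qed

lemma wl_NN: assumes "w \<in> W" shows "weyl_length Dl w = NN w"
  unfolding weyl_length_def
proof (rule Least_equality)
  show "\<exists>ds. length ds = NN w \<and> set ds \<subseteq> Dl \<and> simple_word ds = w" using word_of_NN[OF assms] by blast
next
  fix k assume "\<exists>ds. length ds = k \<and> set ds \<subseteq> Dl \<and> simple_word ds = w"
  then show "NN w \<le> k" using NN_le_length by blast
qed

end



lemma intlem: fixes m n :: int assumes "0 < m*n" "m*n < 4" "\<bar>n\<bar> < \<bar>m\<bar>"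
  shows "\<bar>n\<bar> = 1 \<and> (m*n = 2 \<or> m*n = 3)"
proof -
  have "\<bar>m*n\<bar> = \<bar>m\<bar>*\<bar>n\<bar>" by (simp add: abs_mult)
  have "n \<noteq> 0" using assms(1) by auto
  then have n0: "\<bar>n\<bar> \<ge> 1" by arith
  have "\<bar>n\<bar> < 2"
  proof (rule ccontr)
    assume "\<not> \<bar>n\<bar> < 2"
    then have "\<bar>n\<bar> \<ge> 2" by simp
    moreover have "\<bar>m\<bar> \<ge> 3" using assms(3) \<open>\<bar>n\<bar> \<ge> 2\<close> by simp
    ultimately have "\<bar>m\<bar>*\<bar>n\<bar> \<ge> 3*2" by (intro mult_mono) auto
    then show False using assms \<open>\<bar>m*n\<bar> = \<bar>m\<bar>*\<bar>n\<bar>\<close> by simp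
  qed
  then have n1: "\<bar>n\<bar> = 1" using n0 by simp
  then have "\<bar>m\<bar> \<ge> 2" using assms(3) by simp
  then have "\<bar>m*n\<bar> \<ge> 2" using n1 \<open>\<bar>m*n\<bar> = \<bar>m\<bar>*\<bar>n\<bar>\<close> by simp
  then show ?thesis using n1 assms by auto
qed

lemma cs_vec:
  fixes x y :: "'a::real_inner"
  shows "((x \<bullet> x) *\<^sub>R y - (x \<bullet> y) *\<^sub>R x) \<bullet> ((x \<bullet> x) *\<^sub>R y - (x \<bullet> y) *\<^sub>R x)
     = (x \<bullet> x) * ((x \<bullet> x) * (y \<bullet> y) - (x \<bullet> y)^2)"
  by (simp add: inner_diff_left inner_diff_right power2_eq_square inner_commute algebra_simps)

lemma cs_le: fixes x y :: "'a::real_inner" shows "(x \<bullet> y)^2 \<le> (x \<bullet> x) * (y \<bullet> y)"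
proof (cases "x = 0")
  case True then show ?thesis by simp
next
  case False
  then have pos: "x \<bullet> x > 0" by simp
  have h: "(x \<bullet> x) * ((x \<bullet> x) * (y \<bullet> y) - (x \<bullet> y)^2) \<ge> 0"
    using cs_vec[of x y] by (metis inner_ge_zero)
  have "(x \<bullet> x) * (y \<bullet> y) - (x \<bullet> y)^2 \<ge> 0"
  proof (rule ccontr)
    assume na: "\<not> (x \<bullet> x) * (y \<bullet> y) - (x \<bullet> y)^2 \<ge> 0"
    have "(x \<bullet> x) * ((x \<bullet> x) * (y \<bullet> y) - (x \<bullet> y)^2) < 0"
      by (rule mult_pos_neg[OF pos]) (use na in linarith)
    then show False using h by linarith
  qed
  then show ?thesis by simp
qed

context RS begin

lemma parallel:
  assumes "x \<in> Phi" "y \<in> Phi" "(x \<bullet> y)^2 = (x \<bullet> x) * (y \<bullet> y)"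
  shows "y = x \<or> y = - x"
proof -
  let ?z = "(x \<bullet> x) *\<^sub>R y - (x \<bullet> y) *\<^sub>R x"
  have "?z \<bullet> ?z = 0" using cs_vec[of x y] assms(3) by simp
  then have "?z = 0" by simp
  have xx: "x \<bullet> x \<noteq> 0" using nz2 assms by fastforce
  define c where "c = (x \<bullet> y) / (x \<bullet> x)"
  have xc: "(x \<bullet> x) * c = x \<bullet> y" using xx by (simp add: c_def)
  have "(x \<bullet> x) *\<^sub>R y = (x \<bullet> y) *\<^sub>R x" using \<open>?z = 0\<close> by simp
  also have "\<dots> = (x \<bullet> x) *\<^sub>R (c *\<^sub>R x)" using xc by simp
  finally have yc: "y = c *\<^sub>R x" by (rule scaleR_left_imp_eq[OF xx])
  have "c = 1 \<or> c = -1" using reduced[of x c] assms yc by auto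
  then show ?thesis using yc by auto
qed

lemma strict_cs:
  assumes "x \<in> Phi" "y \<in> Phi" "y \<noteq> x" "y \<noteq> - x"
  shows "(x \<bullet> y)^2 < (x \<bullet> x) * (y \<bullet> y)"
  using cs_le[of x y] parallel[OF assms(1,2)] assms(3,4) by fastforce

lemma R:
  assumes x: "x \<in> Phi" and y: "y \<in> Phi" and nzi: "x \<bullet> y \<noteq> 0" and lt: "y \<bullet> y < x \<bullet> x"
  shows "(2 * (x \<bullet> y) / (x \<bullet> x) = 1 \<or> 2 * (x \<bullet> y) / (x \<bullet> x) = -1)
       \<and> ((x \<bullet> x) / (y \<bullet> y) = 2 \<or> (x \<bullet> x) / (y \<bullet> y) = 3)"
proof -
  have xx: "x \<bullet> x > 0" and yy: "y \<bullet> y > 0" using nz2 x y by auto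
  have "y \<noteq> x" "y \<noteq> - x" using lt by auto
  then have cs: "(x \<bullet> y)^2 < (x \<bullet> x) * (y \<bullet> y)" using strict_cs x y by auto
  obtain m :: int where m: "2 * (x \<bullet> y) / (y \<bullet> y) = of_int m" using cartan[OF y x] by (auto elim: Ints_cases)
  obtain n :: int where n: "2 * (x \<bullet> y) / (x \<bullet> x) = of_int n" using cartan[OF x y] by (auto elim: Ints_cases simp: inner_commute)
  have e1: "of_int m * (y \<bullet> y) = 2 * (x \<bullet> y)" using m yy by (simp add: field_simps)
  have e2: "of_int n * (x \<bullet> x) = 2 * (x \<bullet> y)" using n xx by (simp add: field_simps)
  have "of_int (m * n) * ((x \<bullet> x) * (y \<bullet> y)) = (of_int m * (y \<bullet> y)) * (of_int n * (x \<bullet> x))"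
    by (simp add: algebra_simps)
  also have "\<dots> = 4 * (x \<bullet> y)^2" by (simp add: e1 e2 power2_eq_square)
  finally have mn: "of_int (m * n) = 4 * (x \<bullet> y)^2 / ((x \<bullet> x) * (y \<bullet> y))"
    using xx yy by (simp add: field_simps)
  have "4 * (x \<bullet> y)^2 / ((x \<bullet> x) * (y \<bullet> y)) < 4" using cs xx yy by (simp add: field_simps)
  then have a1: "m * n < 4" using mn by linarith
  have "4 * (x \<bullet> y)^2 / ((x \<bullet> x) * (y \<bullet> y)) > 0" using nzi xx yy by simp
  then have a2: "0 < m * n" using mn by linarith
  have "\<bar>2 * (x \<bullet> y)\<bar> / (x \<bullet> x) < \<bar>2 * (x \<bullet> y)\<bar> / (y \<bullet> y)"
    using xx yy lt nzi by (intro divide_strict_left_mono) auto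
  then have "\<bar>of_int n\<bar> < \<bar>(of_int m::real)\<bar>"
    using m[symmetric] n[symmetric] xx yy by (simp add: abs_divide)
  then have a3: "\<bar>n\<bar> < \<bar>m\<bar>" by linarith
  have n0: "of_int n \<noteq> (0::real)" using e2 nzi by auto
  have "(x \<bullet> x) / (y \<bullet> y) * of_int n = of_int m"
    using e1 e2 xx yy by (simp add: field_simps)
  then have ratio: "(x \<bullet> x) / (y \<bullet> y) = of_int m / of_int n"
    using n0 by (simp add: field_simps)
  from intlem[OF a2 a1 a3] have "\<bar>n\<bar> = 1" "m * n = 2 \<or> m * n = 3" by auto
  then have "n = 1 \<or> n = -1" by auto
  then show ?thesis using ratio n \<open>m * n = 2 \<or> m * n = 3\<close> by auto
qed

lemma nontriv: "\<exists>x::'a. x \<noteq> 0"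
  using nonempty_Basis nonzero_Basis by blast

lemma Phi_ne: "Phi \<noteq> {}"
proof
  assume "Phi = {}"
  then have "span Phi = {0}" by simp
  then show False using spanPhi nontriv by auto
qed

abbreviation "mx \<equiv> max_sq Phi"
abbreviation "mn \<equiv> min_sq Phi"

lemma mx_ge: "b \<in> Phi \<Longrightarrow> b \<bullet> b \<le> mx"
  unfolding max_sq_def using finPhi by (intro Max_ge) auto
lemma mn_le: "b \<in> Phi \<Longrightarrow> mn \<le> b \<bullet> b"
  unfolding min_sq_def using finPhi by (intro Min_le) auto
lemma mx_in: "\<exists>b\<in>Phi. b \<bullet> b = mx"
proof -
  have "Max ((\<lambda>b. b \<bullet> b) ` Phi) \<in> (\<lambda>b. b \<bullet> b) ` Phi" using finPhi Phi_ne by (intro Max_in) auto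
  then obtain b where "b \<in> Phi" "Max ((\<lambda>b. b \<bullet> b) ` Phi) = b \<bullet> b" by blast
  then show ?thesis unfolding max_sq_def by auto
qed
lemma mn_in: "\<exists>b\<in>Phi. b \<bullet> b = mn"
proof -
  have "Min ((\<lambda>b. b \<bullet> b) ` Phi) \<in> (\<lambda>b. b \<bullet> b) ` Phi" using finPhi Phi_ne by (intro Min_in) auto
  then obtain b where "b \<in> Phi" "Min ((\<lambda>b. b \<bullet> b) ` Phi) = b \<bullet> b" by blast
  then show ?thesis unfolding min_sq_def by auto
qed
lemma mn_pos: "mn > 0"
proof -
  obtain b where "b \<in> Phi" "b \<bullet> b = mn" using mn_in by blast
  then show ?thesis using nz2[of b] by simp
qed
lemma mx_pos: "mx > 0"
proof -
  obtain b where "b \<in> Phi" "b \<bullet> b = mx" using mx_in by blast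
  then show ?thesis using nz2[of b] by simp
qed

lemma orth_span_ss: assumes "\<forall>y\<in>S. x \<bullet> y = 0" "u \<in> span S" shows "x \<bullet> u = 0"
  using orthogonal_to_span[of u S x] assms by (simp add: orthogonal_def)

lemma O: assumes a: "a \<in> Phi" and v: "v \<noteq> 0" shows "\<exists>w\<in>W. w a \<bullet> v \<noteq> 0"
proof -
  let ?O = "(\<lambda>w. w a) ` W"
  let ?U = "span ?O"
  have orth: "\<forall>u\<in>?O. g \<bullet> u = 0" if g: "g \<in> Phi" "g \<notin> ?U" for g
  proof
    fix u assume u: "u \<in> ?O"
    then obtain w where w: "w \<in> W" "u = w a" by auto
    have "root_refl g u = (root_refl g \<circ> w) a" using w by simp
    then have "root_refl g u \<in> ?O" using weyl_group.wg_step[OF g(1) w(1)] by (metis image_eqI)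
    then have r: "root_refl g u \<in> ?U" by (rule span_base)
    show "g \<bullet> u = 0"
    proof (rule ccontr)
      assume ne: "g \<bullet> u \<noteq> 0"
      have gg: "g \<bullet> g \<noteq> 0" using nz2 g by fastforce
      let ?c = "2 * (u \<bullet> g) / (g \<bullet> g)"
      have c: "?c \<noteq> 0" using ne gg by (simp add: inner_commute)
      have "u - root_refl g u = ?c *\<^sub>R g" by (simp add: root_refl_def)
      moreover have "u - root_refl g u \<in> ?U" using r u span_base span_diff by blast
      ultimately have "?c *\<^sub>R g \<in> ?U" by simp
      then have "(1 / ?c) *\<^sub>R (?c *\<^sub>R g) \<in> ?U" by (rule span_scale)
      then have "g \<in> ?U" using c by simp
      then show False using g by auto
    qed
  qed
  let ?A = "Phi \<inter> ?U" and ?B = "Phi - ?U"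
  have "\<forall>p\<in>?A. \<forall>q\<in>?B. p \<bullet> q = 0"
  proof (intro ballI)
    fix p q assume p: "p \<in> ?A" and q: "q \<in> ?B"
    have "q \<bullet> p = 0" using orth_span_ss[OF orth] p q by auto
    then show "p \<bullet> q = 0" by (simp add: inner_commute)
  qed
  moreover have "?A \<union> ?B = Phi" by auto
  ultimately have "?A = {} \<or> ?B = {}" using irr unfolding irreducible_rs_def by blast
  moreover have "a \<in> ?A"
  proof -
    have "a \<in> ?O" using weyl_group.wg_id[of Phi] by (metis id_apply image_eqI)
    then have "a \<in> ?U" by (rule span_base)
    then show ?thesis using a by simp
  qed
  ultimately have "Phi \<subseteq> ?U" by auto
  then have "span Phi \<subseteq> ?U" by (simp add: span_minimal)
  then have U: "?U = UNIV" using spanPhi by auto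
  show ?thesis
  proof (rule ccontr)
    assume "\<not> ?thesis"
    then have "\<forall>u\<in>?O. v \<bullet> u = 0" by (auto simp: inner_commute)
    then have "v \<bullet> v = 0" using orth_span_ss U by blast
    then show False using v by simp
  qed
qed

lemma W_len: "w \<in> W \<Longrightarrow> w b \<bullet> w b = b \<bullet> b" using W_inner by blast

lemma TL: assumes b: "b \<in> Phi" shows "b \<bullet> b = mx \<or> b \<bullet> b = mn"
proof (rule ccontr)
  assume "\<not> ?thesis"
  then have l1: "mn < b \<bullet> b" and l2: "b \<bullet> b < mx" using mx_ge mn_le b by (auto simp: less_le)
  obtain bx where bx: "bx \<in> Phi" "bx \<bullet> bx = mx" using mx_in by auto
  obtain bn where bn: "bn \<in> Phi" "bn \<bullet> bn = mn" using mn_in by auto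
  obtain w1 where w1: "w1 \<in> W" "w1 bn \<bullet> b \<noteq> 0" using O[OF bn(1)] nz b by blast
  have "(b \<bullet> b) / mn = 2 \<or> (b \<bullet> b) / mn = 3"
    using R[OF b W_Phi[OF w1(1) bn(1)]] w1 W_len[OF w1(1)] bn l1 by (auto simp: inner_commute)
  then have i1: "b \<bullet> b \<ge> 2 * mn" using mn_pos by (auto simp: field_simps)
  obtain w2 where w2: "w2 \<in> W" "w2 b \<bullet> bx \<noteq> 0" using O[OF b] nz bx by blast
  have "mx / (b \<bullet> b) = 2 \<or> mx / (b \<bullet> b) = 3"
    using R[OF bx(1) W_Phi[OF w2(1) b]] w2 W_len[OF w2(1)] bx l2 by (auto simp: inner_commute)
  then have i2: "mx \<ge> 2 * (b \<bullet> b)" using nz2[OF b] by (auto simp: field_simps)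
  obtain w3 where w3: "w3 \<in> W" "w3 bn \<bullet> bx \<noteq> 0" using O[OF bn(1)] nz bx by blast
  have "mx / mn = 2 \<or> mx / mn = 3"
    using R[OF bx(1) W_Phi[OF w3(1) bn(1)]] w3 W_len[OF w3(1)] bx bn l1 l2 by (auto simp: inner_commute)
  then have i3: "mx \<le> 3 * mn" using mn_pos by (auto simp: field_simps)
  show False using i1 i2 i3 mn_pos by linarith
qed

end



context RS begin

definition wt :: "'a \<Rightarrow> real" where "wt d = (if d \<bullet> d = mx then 1 else mn / mx)"

lemma htv_sum: "htv Phi Dl v = (\<Sum>d\<in>Dl. cf v d * wt d)"
proof -
  have ls: "long_simple Phi Dl = Dl \<inter> {d. d \<bullet> d = mx}"
    using DlPhi by (auto simp: long_simple_def long_root_def)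
  have ss: "short_simple Phi Dl = Dl \<inter> - {d. d \<bullet> d = mx}"
    using ls by (auto simp: short_simple_def)
  have "(\<Sum>d\<in>Dl. cf v d * wt d) = (\<Sum>d\<in>Dl. if d \<bullet> d = mx then cf v d else cf v d * (mn / mx))"
    by (rule sum.cong) (auto simp: wt_def)
  also have "\<dots> = (\<Sum>d\<in>Dl \<inter> {d. d \<bullet> d = mx}. cf v d) + (\<Sum>d\<in>Dl \<inter> - {d. d \<bullet> d = mx}. cf v d * (mn / mx))"
    by (rule sum.If_cases[OF finDl])
  also have "\<dots> = htv Phi Dl v"
    unfolding htv_def ls ss length_ratio_def by (simp add: sum_distrib_left sum_divide_distrib mult.commute)
  finally show ?thesis by simp
qed

lemma htv_add: "htv Phi Dl (x + y) = htv Phi Dl x + htv Phi Dl y"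
  by (simp add: htv_sum cf_add distrib_right sum.distrib)
lemma htv_scale: "htv Phi Dl (c *\<^sub>R x) = c * htv Phi Dl x"
  by (simp add: htv_sum cf_scale sum_distrib_left mult.assoc)
lemma htv_neg: "htv Phi Dl (- x) = - htv Phi Dl x"
  using htv_scale[of "-1" x] by simp
lemma htv_simple: "e \<in> Dl \<Longrightarrow> htv Phi Dl e = wt e"
proof -
  assume e: "e \<in> Dl"
  have "htv Phi Dl e = (\<Sum>d\<in>Dl. if d = e then wt d else 0)"
    unfolding htv_sum by (rule sum.cong) (auto simp: cf_simple[OF e])
  also have "\<dots> = wt e" using e finDl by simp
  finally show ?thesis .
qed
lemma htv_rr: "e \<in> Dl \<Longrightarrow> htv Phi Dl (root_refl e b) = htv Phi Dl b - (2 * (b \<bullet> e) / (e \<bullet> e)) * wt e"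
proof -
  assume e: "e \<in> Dl"
  have "root_refl e b = b + (- (2 * (b \<bullet> e) / (e \<bullet> e))) *\<^sub>R e" by (simp add: rr_expand)
  then have "htv Phi Dl (root_refl e b) = htv Phi Dl b + (- (2 * (b \<bullet> e) / (e \<bullet> e))) * wt e"
    by (simp only: htv_add htv_scale htv_simple[OF e])
  then show ?thesis by simp
qed

lemma ST:
  assumes g: "g \<in> Phi" "g \<bullet> g = mx" and e: "e \<in> Dl" and ne: "g \<bullet> e \<noteq> 0" "g \<noteq> e" "g \<noteq> - e"
  shows "(2 * (g \<bullet> e) / (e \<bullet> e)) * wt e = (if g \<bullet> e > 0 then 1 else -1)"
proof (cases "e \<bullet> e = mx")
  case True
  have er: "e \<in> Phi" using Dl_root e by auto
  have en: "e \<noteq> - g" using ne(3) by (metis minus_minus)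
  have "(g \<bullet> e)^2 < (g \<bullet> g) * (e \<bullet> e)" using strict_cs[OF g(1) er] ne(2) en by auto
  then have "\<bar>g \<bullet> e\<bar>^2 < mx^2" using g True by (simp add: power2_eq_square)
  then have lt: "\<bar>g \<bullet> e\<bar> < mx" using mx_pos by (meson abs_ge_zero power_less_imp_less_base less_imp_le)
  obtain k :: int where k: "2 * (g \<bullet> e) / (e \<bullet> e) = of_int k" using cartan[OF er g(1)] by (auto elim: Ints_cases)
  have h1: "of_int k * mx = 2 * (g \<bullet> e)" using k True mx_pos by (simp add: field_simps)
  have "mx * \<bar>of_int k\<bar> = \<bar>2 * (g \<bullet> e)\<bar>" using h1[symmetric] mx_pos by (simp add: abs_mult mult.commute)
  also have "\<dots> < mx * 2" using lt by simp
  finally have "\<bar>of_int k\<bar> < (2::real)" using mx_pos by simp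
  moreover have "k \<noteq> 0" using k ne True mx_pos by auto
  ultimately have "k = 1 \<or> k = -1" by linarith
  moreover have "k > 0 \<longleftrightarrow> g \<bullet> e > 0"
  proof -
    have "0 < of_int k * mx \<longleftrightarrow> (0::real) < of_int k" using mx_pos by (simp add: zero_less_mult_iff)
    then have "of_int k > (0::real) \<longleftrightarrow> g \<bullet> e > 0" using h1 by simp
    then show ?thesis by simp
  qed
  ultimately show ?thesis using k True by (auto simp: wt_def)
next
  case False
  have er: "e \<in> Phi" using Dl_root e by auto
  have een: "e \<bullet> e = mn" using TL[OF er] False by auto
  have lt: "e \<bullet> e < g \<bullet> g" using mx_ge[OF er] False g by auto
  have r: "2 * (g \<bullet> e) / (g \<bullet> g) = 1 \<or> 2 * (g \<bullet> e) / (g \<bullet> g) = -1" using R[OF g(1) er ne(1) lt] by auto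
  have "(2 * (g \<bullet> e) / (e \<bullet> e)) * wt e = 2 * (g \<bullet> e) / mx"
    using False een mn_pos mx_pos by (simp add: wt_def)
  moreover have "2 * (g \<bullet> e) / mx > 0 \<longleftrightarrow> g \<bullet> e > 0" using mx_pos by (simp add: zero_less_divide_iff)
  ultimately show ?thesis using r g by auto
qed

lemma ah_root: "ah \<in> Phi" using hr by (simp add: highest_root_def)
lemma ah_ge: "b \<in> Phi \<Longrightarrow> 0 \<le> cf (ah - b) d"
  using hr nonneg_cf by (simp add: highest_root_def)

lemma Dl_ne: "Dl \<noteq> {}"
proof
  assume "Dl = {}"
  then have "span Dl = {0}" by simp
  then show False using spanDl nontriv by auto
qed

lemma ah_pos: "ah \<in> P"
proof -
  obtain e where e: "e \<in> Dl" using Dl_ne by auto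
  have "0 \<le> cf (ah - e) e" using ah_ge Dl_root e by auto
  then have "cf ah e \<ge> 1" using cf_diff cf_simple[OF e, of e] by simp
  then show ?thesis using pos_of_cf[OF ah_root e] by simp
qed

lemma ah_dom: assumes d: "d \<in> Dl" shows "0 \<le> ah \<bullet> d"
proof (rule ccontr)
  assume "\<not> 0 \<le> ah \<bullet> d"
  then have neg: "2 * (ah \<bullet> d) / (d \<bullet> d) < 0" using nz2 Dl_root d by (simp add: divide_neg_pos)
  have "0 \<le> cf (ah - root_refl d ah) d" using ah_ge rr_root Dl_root d ah_root by auto
  moreover have "cf (ah - root_refl d ah) d = 2 * (ah \<bullet> d) / (d \<bullet> d)"
    using cf_diff cf_rr[OF d] by simp
  ultimately show False using neg by simp
qed

lemma dom_pos: "b \<in> P \<Longrightarrow> 0 \<le> ah \<bullet> b"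
  using inner_cf[of ah b] pos_cf ah_dom by (simp add: sum_nonneg)

lemma dom_neg: "b \<in> Phi \<Longrightarrow> b \<notin> P \<Longrightarrow> ah \<bullet> b \<le> 0"
  using dom_pos[of "-b"] notpos_neg by fastforce

lemma dom_ineq:
  assumes c: "c \<in> Phi" and dom: "\<forall>d\<in>Dl. 0 \<le> c \<bullet> d"
  shows "c \<bullet> c \<le> ah \<bullet> c \<and> ah \<bullet> c \<le> ah \<bullet> ah"
proof -
  have "c \<bullet> (ah - c) \<ge> 0" using inner_cf[of c "ah - c"] ah_ge[OF c] dom by (simp add: sum_nonneg)
  moreover have "ah \<bullet> (ah - c) \<ge> 0" using inner_cf[of ah "ah - c"] ah_ge[OF c] ah_dom by (simp add: sum_nonneg)
  ultimately show ?thesis by (simp add: inner_diff_right inner_commute)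
qed

lemma ex_max: "finite S \<Longrightarrow> S \<noteq> {} \<Longrightarrow> \<exists>c\<in>S. \<forall>x\<in>S. (f x::real) \<le> f c"
proof -
  assume "finite S" "S \<noteq> {}"
  then have "Max (f ` S) \<in> f ` S" by (intro Max_in) auto
  then obtain c where "c \<in> S" "Max (f ` S) = f c" by blast
  moreover have "\<forall>x\<in>S. f x \<le> Max (f ` S)" using \<open>finite S\<close> by simp
  ultimately show ?thesis by metis
qed

lemma dom_of_max:
  assumes c: "c \<in> Phi" and cl: "\<forall>d\<in>Dl. root_refl d c \<in> S" and mx: "\<forall>x\<in>S. ht x \<le> ht c"
  shows "\<forall>d\<in>Dl. 0 \<le> c \<bullet> d"
proof
  fix d assume d: "d \<in> Dl"
  have "ht (root_refl d c) \<le> ht c" using cl mx d by auto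
  then have "0 \<le> 2 * (c \<bullet> d) / (d \<bullet> d)" using ht_rr[OF d] by simp
  moreover have dd: "d \<bullet> d > 0" using Dl_nz[OF d] by simp
  ultimately have "0 \<le> (2 * (c \<bullet> d) / (d \<bullet> d)) * (d \<bullet> d)" by (intro mult_nonneg_nonneg) auto
  then show "0 \<le> c \<bullet> d" using dd by simp
qed

lemma ah_long: "ah \<bullet> ah = mx"
proof -
  let ?L = "{b \<in> Phi. b \<bullet> b = mx}"
  have "finite ?L" using finPhi by simp
  moreover have "?L \<noteq> {}" using mx_in by auto
  ultimately obtain c where c: "c \<in> ?L" "\<forall>x\<in>?L. ht x \<le> ht c" using ex_max[of ?L ht] by blast
  have "\<forall>d\<in>Dl. root_refl d c \<in> ?L"
  proof
    fix d assume d: "d \<in> Dl"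
    have "root_refl d c \<bullet> root_refl d c = c \<bullet> c" by (rule rr_inner[OF Dl_nz[OF d]])
    then show "root_refl d c \<in> ?L" using c rr_root[OF Dl_root[OF d]] by auto
  qed
  then have "\<forall>d\<in>Dl. 0 \<le> c \<bullet> d" using dom_of_max[of c ?L] c by blast
  then have "c \<bullet> c \<le> ah \<bullet> ah" using dom_ineq[of c] c by force
  then show ?thesis using mx_ge ah_root c by force
qed

lemma orbit: assumes b: "b \<in> Phi" "b \<bullet> b = mx" shows "\<exists>w\<in>W. w ah = b"
proof -
  let ?O = "(\<lambda>w. w b) ` W"
  have fin: "finite ?O" using W_Phi b finPhi by (auto intro: finite_subset)
  have "b \<in> ?O" using weyl_group.wg_id[of Phi] by (metis id_apply image_eqI)
  then obtain c where c: "c \<in> ?O" "\<forall>x\<in>?O. ht x \<le> ht c" using ex_max[OF fin, of ht] by blast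
  then obtain w where w: "w \<in> W" "c = w b" by auto
  have cP: "c \<in> Phi" using w W_Phi b by auto
  have cl: "\<forall>d\<in>Dl. root_refl d c \<in> ?O"
  proof
    fix d assume d: "d \<in> Dl"
    have "root_refl d c = (root_refl d \<circ> w) b" using w by simp
    then show "root_refl d c \<in> ?O" using W_lmul[OF w(1) d] by (metis image_eqI)
  qed
  have "\<forall>d\<in>Dl. 0 \<le> c \<bullet> d" using dom_of_max[OF cP cl c(2)] .
  then have ineq: "c \<bullet> c \<le> ah \<bullet> c \<and> ah \<bullet> c \<le> ah \<bullet> ah" using dom_ineq cP by blast
  have cc: "c \<bullet> c = mx" using w W_len b by auto
  have "(ah - c) \<bullet> (ah - c) = ah \<bullet> ah - 2 * (ah \<bullet> c) + c \<bullet> c"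
    by (simp add: inner_diff_left inner_diff_right inner_commute)
  also have "\<dots> = 0" using ineq cc ah_long by linarith
  finally have "c = ah" by simp
  obtain v where v: "v \<in> W" "v \<circ> w = id" using W_inverse[OF w(1)] by blast
  have "v ah = b" using v w \<open>c = ah\<close> by (metis comp_apply id_apply)
  then show ?thesis using v by auto
qed

end



context RS begin

abbreviation "I \<equiv> I_tilde Dl ah"
abbreviation "X \<equiv> X_tilde Phi Dl ah"

lemma span_I_orth: "x \<in> span I \<Longrightarrow> ah \<bullet> x = 0"
  by (rule orth_span_ss) (auto simp: I_tilde_def)

lemma cf_supp_I: assumes "b \<in> P" "ah \<bullet> b = 0" "cf b d \<noteq> 0" shows "d \<in> I"
proof -
  have d: "d \<in> Dl" using cf_out[of d b] assms(3) by auto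
  have "(\<Sum>e\<in>Dl. cf b e * (ah \<bullet> e)) = ah \<bullet> b" by (rule inner_cf[symmetric])
  then have z: "(\<Sum>e\<in>Dl. cf b e * (ah \<bullet> e)) = 0" using assms(2) by simp
  have nn: "\<forall>e\<in>Dl. 0 \<le> cf b e * (ah \<bullet> e)"
    using pos_cf[OF assms(1)] ah_dom by (auto intro: mult_nonneg_nonneg)
  have "\<forall>e\<in>Dl. cf b e * (ah \<bullet> e) = 0" using sum_nonneg_eq_0_iff[OF finDl, of "\<lambda>e. cf b e * (ah \<bullet> e)"] nn z by simp
  then have "ah \<bullet> d = 0" using d assms(3) by auto
  then show ?thesis using d by (simp add: I_tilde_def)
qed

lemma orth_span_I: assumes "b \<in> P" "ah \<bullet> b = 0" shows "b \<in> span I"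
proof -
  have "b = (\<Sum>d\<in>Dl. cf b d *\<^sub>R d)" by (rule cf_repr)
  also have "\<dots> \<in> span I"
  proof (rule span_sum)
    fix d assume "d \<in> Dl"
    show "cf b d *\<^sub>R d \<in> span I"
    proof (cases "cf b d = 0")
      case True then show ?thesis by (simp add: span_zero)
    next
      case False then show ?thesis using cf_supp_I[OF assms] by (auto intro: span_scale span_base)
    qed
  qed
  finally show ?thesis .
qed

lemma X_def': "w \<in> X \<longleftrightarrow> w \<in> W \<and> (\<forall>b\<in>P. b \<in> span I \<longrightarrow> w b \<in> P)"
  by (auto simp: X_tilde_def)

lemma preimage: assumes w: "w \<in> W" and d: "d \<in> Phi" shows "\<exists>g\<in>Phi. w g = d"
proof -
  obtain v where v: "v \<in> W" "w \<circ> v = id" using W_inverse[OF w] by blast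
  have "w (v d) = d" using v by (metis comp_apply id_apply)
  then show ?thesis using W_Phi[OF v(1) d] by blast
qed

lemma XL: assumes w: "w \<in> X" and d: "d \<in> Dl" and g: "g \<in> Phi" "w g = d" "g \<notin> P"
  shows "root_refl d \<circ> w \<in> X"
proof -
  have wW: "w \<in> W" using w X_def' by auto
  { fix b assume b: "b \<in> P" "b \<in> span I"
    have wb: "w b \<in> P" using w b X_def' by auto
    have "root_refl d (w b) \<in> P"
    proof (rule ccontr)
      assume "root_refl d (w b) \<notin> P"
      then have "w b = d" using S[OF d wb] by auto
      then have "b = g" using g W_inj[OF wW] by (metis injD)
      then show False using b g by auto
    qed }
  then show ?thesis using X_def' W_lmul[OF wW d] by auto
qed

lemma XD: assumes w: "w \<in> X" and ne: "w \<noteq> id"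
  shows "\<exists>d\<in>Dl. \<exists>g\<in>Phi. w g = d \<and> g \<notin> P \<and> w ah \<bullet> d < 0"
proof -
  have wW: "w \<in> W" using w X_def' by auto
  obtain v where v: "v \<in> W" "v \<circ> w = id" "w \<circ> v = id" using W_inverse[OF wW] by blast
  have "\<not> (\<forall>d\<in>Dl. v d \<in> P)"
  proof
    assume "\<forall>d\<in>Dl. v d \<in> P"
    then have "v = id" using H v by auto
    then show False using v ne by simp
  qed
  then obtain d where d: "d \<in> Dl" "v d \<notin> P" by auto
  let ?g = "v d"
  have g: "?g \<in> Phi" using W_Phi v Dl_root d by auto
  have wg: "w ?g = d" using v by (metis comp_apply id_apply)
  have "w ah \<bullet> d = ah \<bullet> ?g" using W_inner[OF wW, of ah ?g] wg by simp
  moreover have "ah \<bullet> ?g \<le> 0" using dom_neg g d by auto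
  moreover have "ah \<bullet> ?g \<noteq> 0"
  proof
    assume z: "ah \<bullet> ?g = 0"
    have ng: "- ?g \<in> P" using notpos_neg g d by auto
    have "ah \<bullet> (- ?g) = 0" using z by simp
    then have "- ?g \<in> span I" using orth_span_I ng by auto
    then have "w (- ?g) \<in> P" using w ng X_def' by auto
    moreover have "w (- ?g) = - d" using W_neg[OF wW] wg by simp
    ultimately show False using neg_notpos Dl_pos d by auto
  qed
  ultimately have "w ah \<bullet> d < 0" by linarith
  then show ?thesis using d g wg by blast
qed

lemma X_id: "id \<in> X" using X_def' weyl_group.wg_id by auto

abbreviation "hv \<equiv> htv Phi Dl"

lemma XN: "w \<in> X \<Longrightarrow> (w ah \<in> P \<longrightarrow> real (NN w) = hv ah - hv (w ah))
                   \<and> (w ah \<notin> P \<longrightarrow> real (NN w) = hv ah - hv (w ah) - 1)"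
proof (induction "NN w" arbitrary: w rule: less_induct)
  case less
  have wW: "w \<in> W" using less.prems X_def' by auto
  show ?case
  proof (cases "w = id")
    case True then show ?thesis using NN_id ah_pos by simp
  next
    case False
    obtain d g where d: "d \<in> Dl" and g: "g \<in> Phi" "w g = d" "g \<notin> P" and neg: "w ah \<bullet> d < 0"
      using XD[OF less.prems False] by blast
    let ?w = "root_refl d \<circ> w"
    let ?b = "w ah"
    have w1: "?w \<in> X" using XL[OF less.prems d g] .
    have NN1: "NN ?w + 1 = NN w" using LM[OF wW d g(1,2)] g(3) by simp
    then have lt: "NN ?w < NN w" by simp
    note IH = less.hyps[OF lt w1]
    have bPhi: "?b \<in> Phi" using W_Phi wW ah_root by auto
    have blong: "?b \<bullet> ?b = mx" using W_len[OF wW] ah_long by simp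
    have b1: "?w ah = root_refl d ?b" by simp
    have dn: "d \<noteq> 0" using Dl_nz d by auto
    have bnd: "?b \<noteq> d" using neg inner_ge_zero[of "w ah"] by (metis not_le)
    show ?thesis
    proof (cases "?b = - d")
      case True
      have "?w ah = d" using True rr_scale[of d "-1" d] rr_self[OF dn] by simp
      then have "real (NN ?w) = hv ah - hv d" using IH Dl_pos d by simp
      moreover have "d \<bullet> d = mx" using blong True by simp
      then have "hv d = 1" using htv_simple[OF d] by (simp add: wt_def)
      moreover have "?b \<notin> P" using True neg_notpos Dl_pos d by auto
      moreover have "hv ?b = -1" using True htv_neg \<open>hv d = 1\<close> by simp
      ultimately show ?thesis using NN1 by simp
    next
      case False
      have st: "(2 * (?b \<bullet> d) / (d \<bullet> d)) * wt d = -1"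
        using ST[OF bPhi blong d] neg bnd False by auto
      have hb1: "hv (?w ah) = hv ?b + 1" using htv_rr[OF d, of ?b] st by simp
      show ?thesis
      proof (cases "?b \<in> P")
        case True
        have "?w ah \<in> P" using S[OF d True bnd] by simp
        then have "real (NN ?w) = hv ah - hv (?w ah)" using IH by simp
        then show ?thesis using True NN1 hb1 by simp
      next
        case nP: False
        have "?w ah \<notin> P" using S2[OF d bPhi] nP False by simp
        then have "real (NN ?w) = hv ah - hv (?w ah) - 1" using IH by simp
        then show ?thesis using nP NN1 hb1 by simp
      qed
    qed
  qed
qed

lemma XU: "w \<in> X \<Longrightarrow> w' \<in> X \<Longrightarrow> w ah = w' ah \<Longrightarrow> w = w'"
proof (induction "NN w" arbitrary: w w' rule: less_induct)
  case less
  have wW: "w \<in> W" and wW': "w' \<in> W" using less.prems X_def' by auto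
  show ?case
  proof (cases "w = id")
    case True
    then have "w' ah = ah" using less.prems by simp
    then have "real (NN w') = 0" using XN[OF less.prems(2)] ah_pos by simp
    then have "w' = id" using NN_zero_iff[OF wW'] H[OF wW'] by simp
    then show ?thesis using True by simp
  next
    case False
    obtain d g where d: "d \<in> Dl" and g: "g \<in> Phi" "w g = d" "g \<notin> P" and neg: "w ah \<bullet> d < 0"
      using XD[OF less.prems(1) False] by blast
    obtain g' where g': "g' \<in> Phi" "w' g' = d" using preimage[OF wW' Dl_root[OF d]] by blast
    have "ah \<bullet> g' = w' ah \<bullet> d" using W_inner[OF wW', of ah g'] g' by simp
    then have "ah \<bullet> g' < 0" using neg less.prems(3) by simp
    then have g'P: "g' \<notin> P" using dom_pos by force
    have w1: "root_refl d \<circ> w \<in> X" using XL[OF less.prems(1) d g] .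
    have w1': "root_refl d \<circ> w' \<in> X" using XL[OF less.prems(2) d g' g'P] .
    have "NN (root_refl d \<circ> w) + 1 = NN w" using LM[OF wW d g(1,2)] g(3) by simp
    then have lt: "NN (root_refl d \<circ> w) < NN w" by simp
    have "root_refl d \<circ> w = root_refl d \<circ> w'"
      using less.hyps[OF lt w1 w1'] less.prems(3) by simp
    then have "root_refl d \<circ> (root_refl d \<circ> w) = root_refl d \<circ> (root_refl d \<circ> w')" by simp
    then show ?thesis using rr_invol_comp[OF Dl_nz[OF d]] by (simp add: comp_assoc[symmetric])
  qed
qed

lemma XE: assumes b: "b \<in> Phi" "b \<bullet> b = mx" shows "\<exists>w\<in>X. w ah = b"
proof -
  obtain w0 where "w0 \<in> W" "w0 ah = b" using orbit[OF b] by blast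
  then have ex: "\<exists>w. w \<in> W \<and> w ah = b" by blast
  obtain w where w: "w \<in> W" "w ah = b" and min: "\<And>u. u \<in> W \<Longrightarrow> u ah = b \<Longrightarrow> NN w \<le> NN u"
    using ex_has_least_nat[of "\<lambda>w. w \<in> W \<and> w ah = b" _ NN] ex by metis
  have "w \<in> X"
  proof (rule ccontr)
    assume "w \<notin> X"
    then obtain g where g: "g \<in> P" "g \<in> span I" "w g \<notin> P" using w X_def' by auto
    have ag: "ah \<bullet> g = 0" using span_I_orth g by auto
    have "\<exists>e\<in>I. w e \<notin> P"
    proof (rule ccontr)
      assume "\<not> ?thesis"
      then have "\<forall>d\<in>Dl. cf g d \<noteq> 0 \<longrightarrow> w d \<in> P" using cf_supp_I[OF g(1) ag] by auto
      then have "w g \<in> P" using pos_comb[OF W_linear[OF w(1)] g(1) W_Phi[OF w(1) pos_root[OF g(1)]]] by auto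
      then show False using g by auto
    qed
    then obtain e where e: "e \<in> I" "w e \<notin> P" by auto
    have eD: "e \<in> Dl" and ae: "ah \<bullet> e = 0" using e by (auto simp: I_tilde_def)
    have w': "w \<circ> root_refl e \<in> W" using W_rmul[OF w(1) eD] .
    have "(w \<circ> root_refl e) ah = b" using rr_orth[OF ae] w by simp
    then have "NN w \<le> NN (w \<circ> root_refl e)" using min w' by auto
    moreover have "NN (w \<circ> root_refl e) + 1 = NN w" using RM[OF w(1) eD] e by simp
    ultimately show False by simp
  qed
  then show ?thesis using w by blast
qed

lemma x_elem_props: assumes b: "b \<in> Phi" "b \<bullet> b = mx"
  shows "x_elem Phi Dl ah b \<in> X \<and> x_elem Phi Dl ah b ah = b"
proof -
  have "\<exists>!w. w \<in> X \<and> w ah = b" using XE[OF b] XU by blast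
  then show ?thesis unfolding x_elem_def by (rule theI')
qed

end



context RS begin

lemma rr_W: "a \<in> Phi \<Longrightarrow> root_refl a \<in> W"
  using weyl_group.wg_step[OF _ weyl_group.wg_id, of a Phi] by simp

lemma Q: "a \<in> P \<Longrightarrow> a \<bullet> a = mx \<Longrightarrow> real (NN (root_refl a)) = 2 * hv a - 1"
proof (induction "nat \<lceil>ht a\<rceil>" arbitrary: a rule: less_induct)
  case less
  have aPhi: "a \<in> Phi" using less.prems pos_root by auto
  have an: "a \<noteq> 0" using nz aPhi by auto
  show ?case
  proof (cases "a \<in> Dl")
    case True
    have "inv_set (root_refl a) = {a}"
    proof -
      { fix b assume b: "b \<in> P"
        have "b \<noteq> - a" using b neg_notpos[OF less.prems(1)] by auto
        then have "root_refl a b \<notin> P \<longleftrightarrow> b = a" using S2[OF True pos_root[OF b]] b by auto }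
      then show ?thesis unfolding inv_set_def using less.prems(1) by auto
    qed
    then have "NN (root_refl a) = 1" by (simp add: NN_def)
    moreover have "hv a = 1" using htv_simple[OF True] less.prems by (simp add: wt_def)
    ultimately show ?thesis by simp
  next
    case False
    obtain d where d: "d \<in> Dl" "a \<bullet> d > 0" using exists_pos_inner less.prems by blast
    have dn: "d \<noteq> 0" using Dl_nz d by auto
    have dP: "d \<in> Phi" using Dl_root d by auto
    have ad: "a \<noteq> d" using False d by auto
    have amd: "a \<noteq> - d" using less.prems(1) neg_notpos Dl_pos d by auto
    let ?a = "root_refl d a"
    have a'P: "?a \<in> P" using S d ad less.prems by auto
    have a'Phi: "?a \<in> Phi" using pos_root a'P by auto
    have a'l: "?a \<bullet> ?a = mx" using rr_inner[OF dn] less.prems by simp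
    have st: "(2 * (a \<bullet> d) / (d \<bullet> d)) * wt d = 1"
      using ST[OF aPhi less.prems(2) d(1)] d(2) ad amd by auto
    have hva: "hv ?a = hv a - 1" using htv_rr[OF d(1), of a] by (simp only: st)
    have k: "2 * (a \<bullet> d) / (d \<bullet> d) \<ge> 1"
      using int_ge1 cartan[OF dP aPhi] d nz2[OF dP] by auto
    have "ht ?a \<le> ht a - 1" using ht_rr[OF d(1)] k by simp
    moreover have "ht ?a > 0" using ht_pos a'P by auto
    ultimately have lt: "nat \<lceil>ht ?a\<rceil> < nat \<lceil>ht a\<rceil>" by linarith
    have IH: "real (NN (root_refl ?a)) = 2 * hv ?a - 1" using less.hyps[OF lt a'P a'l] .
    have a'n: "?a \<noteq> 0" using nz a'Phi by auto
    let ?t = "- (2 * (d \<bullet> ?a) / (?a \<bullet> ?a))"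
    have "d \<bullet> ?a = - (a \<bullet> d)" using rr_inner_a[OF dn, of a] by (simp add: inner_commute)
    then have tpos: "?t > 0" using d(2) nz2[OF a'Phi] by (simp add: divide_pos_pos)
    let ?c = "root_refl ?a d"
    have ceq: "?c = d + ?t *\<^sub>R ?a" by (simp add: rr_expand)
    have cPhi: "?c \<in> Phi" using rr_root a'Phi dP by auto
    have cP: "?c \<in> P"
    proof (rule pos_of_all[OF cPhi], intro ballI)
      fix e assume "e \<in> Dl"
      have "cf ?c e = cf d e + ?t * cf ?a e" by (subst ceq) (simp only: cf_add cf_scale)
      moreover have "cf d e \<ge> 0" using pos_cf Dl_pos d by auto
      moreover have "cf ?a e \<ge> 0" using pos_cf a'P by auto
      moreover have "0 \<le> ?t * cf ?a e" using tpos \<open>cf ?a e \<ge> 0\<close> by (intro mult_nonneg_nonneg) auto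
      ultimately show "0 \<le> cf ?c e" by linarith
    qed
    have sa'W: "root_refl ?a \<in> W" using rr_W a'Phi by auto
    have N1: "NN (root_refl ?a \<circ> root_refl d) = NN (root_refl ?a) + 1"
      using RM[OF sa'W d(1)] cP by blast
    have cd: "?c \<noteq> d"
    proof
      assume "?c = d"
      then have "?t *\<^sub>R ?a = 0" using ceq by (metis add_cancel_left_right)
      then show False using tpos a'n by simp
    qed
    let ?g = "root_refl d ?c"
    have gP: "?g \<in> P" using S[OF d(1) cP cd] .
    have uW: "root_refl ?a \<circ> root_refl d \<in> W" using W_rmul sa'W d by auto
    have ug: "(root_refl ?a \<circ> root_refl d) ?g = d"
      using rr_invol[OF dn] rr_invol[OF a'n] by simp
    have N2: "NN (root_refl d \<circ> (root_refl ?a \<circ> root_refl d)) = NN (root_refl ?a \<circ> root_refl d) + 1"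
      using LM[OF uW d(1) pos_root[OF gP] ug] gP by blast
    have conj: "root_refl d \<circ> root_refl ?a = root_refl a \<circ> root_refl d"
      using isom_conj_comp[OF rr_isom[OF dn], of ?a] rr_invol[OF dn] by simp
    have "root_refl d \<circ> (root_refl ?a \<circ> root_refl d) = root_refl a"
    proof -
      have "root_refl d \<circ> (root_refl ?a \<circ> root_refl d) = (root_refl a \<circ> root_refl d) \<circ> root_refl d"
        using conj by (simp add: comp_assoc[symmetric])
      also have "\<dots> = root_refl a" using rr_invol_comp[OF dn] by (simp add: comp_assoc)
      finally show ?thesis .
    qed
    then have "NN (root_refl a) = NN (root_refl ?a) + 2" using N1 N2 by simp
    then show ?thesis using IH hva by simp
  qed
qed

end

theorem proposition1p8:
  fixes \<Phi> \<Delta> :: "'a::euclidean_space set" and \<alpha>h \<alpha> :: 'a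
  assumes "root_system \<Phi>" and "reduced_rs \<Phi>" and "irreducible_rs \<Phi>"
    and "is_base \<Phi> \<Delta>" and "highest_root \<Phi> \<Delta> \<alpha>h"
    and "\<alpha> \<in> pos_roots \<Phi> \<Delta>" and "long_root \<Phi> \<alpha>"
  shows "real (weyl_length \<Delta> (x_elem \<Phi> \<Delta> \<alpha>h \<alpha>))
           = (real (weyl_length \<Delta> (root_refl \<alpha>h)) - real (weyl_length \<Delta> (root_refl \<alpha>))) / 2
       \<and> real (weyl_length \<Delta> (x_elem \<Phi> \<Delta> \<alpha>h \<alpha>)) = htv \<Phi> \<Delta> \<alpha>h - htv \<Phi> \<Delta> \<alpha>
       \<and> real (weyl_length \<Delta> (x_elem \<Phi> \<Delta> \<alpha>h (- \<alpha>)))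
           = (real (weyl_length \<Delta> (root_refl \<alpha>h)) + real (weyl_length \<Delta> (root_refl \<alpha>))) / 2
       \<and> real (weyl_length \<Delta> (x_elem \<Phi> \<Delta> \<alpha>h (- \<alpha>))) = htv \<Phi> \<Delta> \<alpha>h + htv \<Phi> \<Delta> \<alpha> - 1"
proof -
  interpret RS \<Phi> \<Delta> \<alpha>h using assms(1-5) by (unfold_locales)
  have aP: "\<alpha> \<in> P" using assms(6) .
  have aPhi: "\<alpha> \<in> \<Phi>" using pos_root[OF aP] .
  have al: "\<alpha> \<bullet> \<alpha> = mx" using assms(7) by (simp add: long_root_def)
  have naPhi: "- \<alpha> \<in> \<Phi>" using neg_root[OF aPhi] .
  have nal: "- \<alpha> \<bullet> - \<alpha> = mx" using al by simp
  have naP: "- \<alpha> \<notin> P" using neg_notpos[OF aP] .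
  obtain x1 where x1: "x1 = x_elem \<Phi> \<Delta> \<alpha>h \<alpha>" by simp
  obtain x2 where x2: "x2 = x_elem \<Phi> \<Delta> \<alpha>h (- \<alpha>)" by simp
  have p1: "x1 \<in> X" "x1 \<alpha>h = \<alpha>" using x_elem_props[OF aPhi al] x1 by auto
  have p2: "x2 \<in> X" "x2 \<alpha>h = - \<alpha>" using x_elem_props[OF naPhi nal] x2 by auto
  have l1: "real (weyl_length \<Delta> x1) = hv \<alpha>h - hv \<alpha>"
    using wl_NN[of x1] p1 XN[OF p1(1)] aP X_def' by auto
  have l2: "real (weyl_length \<Delta> x2) = hv \<alpha>h + hv \<alpha> - 1"
    using wl_NN[of x2] p2 XN[OF p2(1)] naP X_def' htv_neg by auto
  have l3: "real (weyl_length \<Delta> (root_refl \<alpha>h)) = 2 * hv \<alpha>h - 1"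
    using wl_NN[OF rr_W[OF ah_root]] Q[OF ah_pos ah_long] by simp
  have l4: "real (weyl_length \<Delta> (root_refl \<alpha>)) = 2 * hv \<alpha> - 1"
    using wl_NN[OF rr_W[OF aPhi]] Q[OF aP al] by simp
  show ?thesis using l1 l2 l3 l4 x1 x2 by simp
qed


end
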